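(* Consider the Hermitean matrix model described in the context. Let $B\geq 2$, $N_1\geq 2$, $N_2,\dots,N_B\geq 1$, and let all indices $a^\beta_i\in\{0,\dots,\mathcal{N}\}$ ($1\le\beta\le B$, $1\le i\le N_\beta$) be pairwise different. Then \[ G_{|a^1_1\dots a^1_{N_1}|\dots|a^B_1\dots a^B_{N_B}|}=\lambda\,\frac{G_{|a^1_1a^1_3\dots a^1_{N_1}|a^2_1\dots a^2_{N_2}|\dots|a^B_1\dots a^B_{N_B}|}-G_{|a^1_2a^1_3\dots a^1_{N_1}|a^2_1\dots a^2_{N_2}|\dots|a^B_1\dots a^B_{N_B}|}}{E_{a^1_1}^2-E_{a^1_2}^2}. \]
   Context: Fix an integer $\mathcal{N}\geq 1$, a constant $V>0$, a coupling constant $\lambda$ (real or complex), a constant $\kappa$, a mass $\mu>0$ and a differentiable strictly increasing function $e:\mathbb{R}_+\to\mathbb{R}_+$ with $e(0)=0$; put $E_m:=\mu^2\big(\frac12+e\big(\frac{m}{\mu^2V}\big)\big)$, $m=0,\dots,\mathcal{N}$, and $E=\mathrm{diag}(E_0,\dots,E_{\mathcal{N}})$. For Hermitean $(\mathcal{N}+1)\times(\mathcal{N}+1)$ matrices $\Phi$ let $S[\Phi]=V\,\mathrm{tr}(E\Phi^2+\kappa\Phi+\frac{\lambda}{3}\Phi^3)$ and define the partition function $\mathcal{Z}[J]=\int\mathcal{D}\Phi\,\exp(-S[\Phi]+V\,\mathrm{tr}(J\Phi))$ for a source matrix $J$, understood as a formal perturbation series in $\lambda$ (i.e. $\mathcal{Z}[J]=K\exp\big(-\frac{\lambda}{3V^2}\sum_{m,n,k}\frac{\partial^3}{\partial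 J_{mn}\partial J_{nk}\partial J_{km}}\big)\exp\big(\sum_{m,n}\frac V2(J_{nm}-\kappa\delta_{nm})\frac{1}{E_n+E_m}(J_{mn}-\kappa\delta_{nm})\big)$), with the entries $J_{mn}$ treated as independent variables. Write $\frac{\partial^N}{\partial\mathbb{J}_{a_1\dots a_N}}:=\frac{\partial^N}{\partial J_{a_1a_2}\cdots\partial J_{a_{N-1}a_N}\partial J_{a_Na_1}}$ (for $N=1$ this is $\frac{\partial}{\partial J_{a_1a_1}}$). For pairwise different indices the correlation functions with $B$ boundary components (cycles) of lengths $N_1,\dots,N_B$ are \[ G_{|a^1_1\dots a^1_{N_1}|\dots|a^B_1\dots a^B_{N_B}|}=V^{B-2}\frac{\partial^{N_1}}{\partial\mathbb{J}_{a^1_1\dots a^1_{N_1}}}\cdots\frac{\partial^{N_B}}{\partial\mathbb{J}_{a^B_1\dots a^B_{N_B}}}\log\frac{\mathcal{Z}[J]}{\mathcal{Z}[0]}\Big|_{J=0}. \] *)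

theory Defs
  imports "HOL-Complex_Analysis.Complex_Analysis" "HOL-Computational_Algebra.Formal_Power_Series"
begin

definition Eval :: "real \<Rightarrow> real \<Rightarrow> (real \<Rightarrow> real) \<Rightarrow> nat \<Rightarrow> real" where
  "Eval \<mu> V e m = \<mu>\<^sup>2 * (1/2 + e (real m / (\<mu>\<^sup>2 * V)))"

text \<open>Source matrices: entries J m n are independent complex variables
  (only indices in 0..NN matter).\<close>
type_synonym src = "nat \<Rightarrow> nat \<Rightarrow> complex"

definition pd :: "nat \<Rightarrow> nat \<Rightarrow> (src \<Rightarrow> complex) \<Rightarrow> src \<Rightarrow> complex" where
  "pd m n f J = deriv (\<lambda>z. f (J(m := (J m)(n := z)))) (J m n)"

definition Delta :: "nat \<Rightarrow> (src \<Rightarrow> complex) \<Rightarrow> src \<Rightarrow> complex" where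
  "Delta NN f = (\<lambda>J. \<Sum>m\<le>NN. \<Sum>n\<le>NN. \<Sum>k\<le>NN. pd m n (pd n k (pd k m f)) J)"

definition Wfree :: "nat \<Rightarrow> real \<Rightarrow> real \<Rightarrow> (nat \<Rightarrow> real) \<Rightarrow> src \<Rightarrow> complex" where
  "Wfree NN V \<kappa> E J = (\<Sum>m\<le>NN. \<Sum>n\<le>NN.
      complex_of_real (V/2) * (J n m - (if n = m then complex_of_real \<kappa> else 0))
      * complex_of_real (1 / (E n + E m)) * (J m n - (if n = m then complex_of_real \<kappa> else 0)))"

text \<open>Z[J] as a formal power series in lambda (the constant K is set to 1; it cancels
  in Z[J]/Z[0]). The coefficient of lambda^k of exp(-lambda/(3V^2) Delta) exp(W).\<close>
definition Zfps :: "nat \<Rightarrow> real \<Rightarrow> real \<Rightarrow> (nat \<Rightarrow> real) \<Rightarrow> src \<Rightarrow> complex fps" where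
  "Zfps NN V \<kappa> E J = Abs_fps (\<lambda>k.
      (complex_of_real (- 1 / (3 * V\<^sup>2))) ^ k / of_nat (fact k)
      * ((Delta NN ^^ k) (\<lambda>J'. exp (Wfree NN V \<kappa> E J')) J))"

definition fpslog :: "complex fps \<Rightarrow> complex fps" where
  "fpslog F = fps_const (Ln (F $ 0)) + (fps_ln 1 oo (F / fps_const (F $ 0) - 1))"

definition cycle_pairs :: "nat list \<Rightarrow> (nat \<times> nat) list" where
  "cycle_pairs a = zip a (tl a @ [hd a])"

definition dcycle :: "nat list \<Rightarrow> (src \<Rightarrow> complex) \<Rightarrow> src \<Rightarrow> complex" where
  "dcycle a f = foldr (\<lambda>(m, n) g. pd m n g) (cycle_pairs a) f"

definition dall :: "nat list list \<Rightarrow> (src \<Rightarrow> complex) \<Rightarrow> src \<Rightarrow> complex" where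
  "dall bs f = foldr dcycle bs f"

definition Gcorr :: "nat \<Rightarrow> real \<Rightarrow> real \<Rightarrow> (nat \<Rightarrow> real) \<Rightarrow> nat list list \<Rightarrow> complex fps" where
  "Gcorr NN V \<kappa> E bs = Abs_fps (\<lambda>k.
      complex_of_real (V powi (int (length bs) - 2))
      * dall bs (\<lambda>J. fpslog (Zfps NN V \<kappa> E J / Zfps NN V \<kappa> E (\<lambda>_ _. 0)) $ k) (\<lambda>_ _. 0))"

end

theory Submission
  imports Defs
begin


definition upd :: "src \<Rightarrow> nat \<Rightarrow> nat \<Rightarrow> complex \<Rightarrow> src" where
  "upd J m n z = J(m := (J m)(n := z))"

lemma upd_same[simp]: "upd J m n (J m n) = J"
  by (auto simp: upd_def)
lemma upd_upd[simp]: "upd (upd J m n w) m n z = upd J m n z"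
  by (auto simp: upd_def)
lemma upd_apply: "upd J m n z a b = (if a = m \<and> b = n then z else J a b)"
  by (auto simp: upd_def)
lemma upd_at[simp]: "upd J m n z m n = z"
  by (auto simp: upd_def)

lemma pd_upd: "pd m n f J = deriv (\<lambda>z. f (upd J m n z)) (J m n)"
  by (simp add: pd_def upd_def)

inductive S :: "(src \<Rightarrow> complex) \<Rightarrow> bool" where
  S_const: "S (\<lambda>J. c)"
| S_coord: "S (\<lambda>J. J a b)"
| S_add: "S f \<Longrightarrow> S g \<Longrightarrow> S (\<lambda>J. f J + g J)"
| S_mult: "S f \<Longrightarrow> S g \<Longrightarrow> S (\<lambda>J. f J * g J)"
| S_exp: "S f \<Longrightarrow> S (\<lambda>J. exp (f J))"

lemma S_has_deriv:
  assumes "S f"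
  shows "\<exists>f'. S f' \<and> (\<forall>J z. ((\<lambda>w. f (upd J m n w)) has_field_derivative f' (upd J m n z)) (at z))"
  using assms
proof induction
  case (S_const c)
  show ?case by (intro exI[of _ "\<lambda>J. 0"]) (auto intro: S.intros derivative_eq_intros)
next
  case (S_coord a b)
  show ?case
  proof (intro exI[of _ "\<lambda>J. if a = m \<and> b = n then 1 else 0"] conjI allI)
    show "S (\<lambda>J. if a = m \<and> b = n then 1 else 0)" by (rule S_const)
    fix J z
    show "((\<lambda>w. upd J m n w a b) has_field_derivative (if a = m \<and> b = n then 1 else 0)) (at z)"
      by (auto simp: upd_apply intro!: derivative_eq_intros)
  qed
next
  case (S_add f g)
  then obtain f' g' where "S f'" "S g'"
    and df: "\<And>J z. ((\<lambda>w. f (upd J m n w)) has_field_derivative f' (upd J m n z)) (at z)"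
    and dg: "\<And>J z. ((\<lambda>w. g (upd J m n w)) has_field_derivative g' (upd J m n z)) (at z)" by blast
  show ?case
    by (intro exI[of _ "\<lambda>J. f' J + g' J"] conjI allI S.intros \<open>S f'\<close> \<open>S g'\<close>
        derivative_intros df dg)
next
  case (S_mult f g)
  then obtain f' g' where "S f'" "S g'"
    and df: "\<And>J z. ((\<lambda>w. f (upd J m n w)) has_field_derivative f' (upd J m n z)) (at z)"
    and dg: "\<And>J z. ((\<lambda>w. g (upd J m n w)) has_field_derivative g' (upd J m n z)) (at z)" by blast
  show ?case
  proof (intro exI[of _ "\<lambda>J. f J * g' J + f' J * g J"] conjI allI)
    show "S (\<lambda>J. f J * g' J + f' J * g J)" by (intro S.intros S_mult.hyps \<open>S f'\<close> \<open>S g'\<close>)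
    fix J z
    show "((\<lambda>w. f (upd J m n w) * g (upd J m n w)) has_field_derivative
        f (upd J m n z) * g' (upd J m n z) + f' (upd J m n z) * g (upd J m n z)) (at z)"
      using DERIV_mult[OF df dg] by (simp add: algebra_simps)
  qed
next
  case (S_exp f)
  then obtain f' where "S f'"
    and df: "\<And>J z. ((\<lambda>w. f (upd J m n w)) has_field_derivative f' (upd J m n z)) (at z)" by blast
  show ?case
  proof (intro exI[of _ "\<lambda>J. exp (f J) * f' J"] conjI allI)
    show "S (\<lambda>J. exp (f J) * f' J)" by (intro S.intros S_exp.hyps \<open>S f'\<close>)
    fix J z
    show "((\<lambda>w. exp (f (upd J m n w))) has_field_derivative exp (f (upd J m n z)) * f' (upd J m n z)) (at z)"
      using DERIV_chain2[OF DERIV_exp df] by simp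
  qed
qed

lemma S_pd: "S f \<Longrightarrow> S (pd m n f)"
  and S_pd_deriv: "S f \<Longrightarrow> ((\<lambda>w. f (upd J m n w)) has_field_derivative pd m n f (upd J m n z)) (at z)"
proof -
  assume "S f"
  then obtain f' where f': "S f'" "\<And>J z. ((\<lambda>w. f (upd J m n w)) has_field_derivative f' (upd J m n z)) (at z)"
    using S_has_deriv by blast
  have eq: "pd m n f = f'"
  proof
    fix J
    show "pd m n f J = f' J"
      using DERIV_imp_deriv[OF f'(2)[of J "J m n"]] by (simp add: pd_upd)
  qed
  show "S (pd m n f)" using eq f' by simp
  show "((\<lambda>w. f (upd J m n w)) has_field_derivative pd m n f (upd J m n z)) (at z)"
    using eq f' by simp
qed

lemma S_pd_deriv': "S f \<Longrightarrow> ((\<lambda>w. f (upd J m n w)) has_field_derivative pd m n f J) (at (J m n))"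
  using S_pd_deriv[where z="J m n" and J=J and m=m and n=n] by simp

lemma pd_eqI:
  assumes "\<And>J. ((\<lambda>w. f (upd J m n w)) has_field_derivative g J) (at (J m n))"
  shows "pd m n f = g"
proof
  fix J show "pd m n f J = g J" using DERIV_imp_deriv[OF assms[of J]] by (simp add: pd_upd)
qed

lemma pd_const[simp]: "pd m n (\<lambda>J. c) = (\<lambda>J. 0)"
  by (rule pd_eqI) (auto intro: derivative_eq_intros)

lemma pd_coord: "pd m n (\<lambda>J. J a b) = (\<lambda>J. if a = m \<and> b = n then 1 else 0)"
  by (rule pd_eqI) (auto simp: upd_apply intro!: derivative_eq_intros)

lemma pd_add: "S f \<Longrightarrow> S g \<Longrightarrow> pd m n (\<lambda>J. f J + g J) = (\<lambda>J. pd m n f J + pd m n g J)"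
  by (rule pd_eqI) (auto intro!: derivative_intros S_pd_deriv')

lemma pd_mult: "S f \<Longrightarrow> S g \<Longrightarrow> pd m n (\<lambda>J. f J * g J) = (\<lambda>J. pd m n f J * g J + f J * pd m n g J)"
  by (rule pd_eqI) (auto intro!: derivative_eq_intros S_pd_deriv')

lemma pd_exp: "S f \<Longrightarrow> pd m n (\<lambda>J. exp (f J)) = (\<lambda>J. exp (f J) * pd m n f J)"
  by (rule pd_eqI) (auto intro!: derivative_eq_intros S_pd_deriv')

lemma pd_cmult: "S f \<Longrightarrow> pd m n (\<lambda>J. c * f J) = (\<lambda>J. c * pd m n f J)"
  by (rule pd_eqI) (auto intro!: derivative_eq_intros S_pd_deriv')

lemma pd_minus: "S f \<Longrightarrow> S g \<Longrightarrow> pd m n (\<lambda>J. f J - g J) = (\<lambda>J. pd m n f J - pd m n g J)"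
  by (rule pd_eqI) (auto intro!: derivative_eq_intros S_pd_deriv')

lemma S_cmult: "S f \<Longrightarrow> S (\<lambda>J. c * f J)"
  by (intro S.intros)

lemma S_minus: "S f \<Longrightarrow> S g \<Longrightarrow> S (\<lambda>J. f J - g J)"
proof -
  assume "S f" "S g"
  hence "S (\<lambda>J. f J + (-1) * g J)" by (intro S.intros)
  thus ?thesis by simp
qed

lemma S_sum: "(\<And>i. i \<in> A \<Longrightarrow> S (f i)) \<Longrightarrow> S (\<lambda>J. \<Sum>i\<in>A. f i J)"
proof (induction A rule: infinite_finite_induct)
  case (infinite A) then show ?case by (simp add: S_const)
next
  case empty then show ?case by (simp add: S_const)
next
  case (insert x F)
  then show ?case by (simp add: S_add)
qed

lemma pd_sum: "(\<And>i. i \<in> A \<Longrightarrow> S (f i)) \<Longrightarrow> pd m n (\<lambda>J. \<Sum>i\<in>A. f i J) = (\<lambda>J. \<Sum>i\<in>A. pd m n (f i) J)"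
proof (induction A rule: infinite_finite_induct)
  case (infinite A) then show ?case by simp
next
  case empty then show ?case by simp
next
  case (insert x F)
  have "pd m n (\<lambda>J. \<Sum>i\<in>insert x F. f i J) = pd m n (\<lambda>J. f x J + (\<Sum>i\<in>F. f i J))"
    using insert by simp
  also have "\<dots> = (\<lambda>J. pd m n (f x) J + pd m n (\<lambda>J. \<Sum>i\<in>F. f i J) J)"
    using insert by (intro pd_add S_sum) auto
  finally show ?case using insert by simp
qed

lemma pd_comm: "S f \<Longrightarrow> pd a b (pd c d f) = pd c d (pd a b f)"
proof (induction rule: S.induct)
  case (S_const c) then show ?case by simp
next
  case (S_coord a b) then show ?case by (simp add: pd_coord)
next
  case (S_add f g) then show ?case by (simp add: pd_add S_pd)
next
  case (S_mult f g)
  then show ?case by (simp add: pd_mult pd_add S_pd S.intros algebra_simps)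
next
  case (S_exp f)
  then show ?case by (simp add: pd_mult pd_exp S_pd S.intros algebra_simps)
qed


definition Dl :: "(nat \<times> nat) list \<Rightarrow> (src \<Rightarrow> complex) \<Rightarrow> src \<Rightarrow> complex" where
  "Dl ds f = foldr (\<lambda>(m, n) g. pd m n g) ds f"

lemma Dl_Nil[simp]: "Dl [] f = f" by (simp add: Dl_def)
lemma Dl_Cons[simp]: "Dl ((m,n) # ds) f = pd m n (Dl ds f)" by (simp add: Dl_def)
lemma Dl_append: "Dl (xs @ ys) f = Dl xs (Dl ys f)" by (simp add: Dl_def)

lemma dcycle_Dl: "dcycle a f = Dl (cycle_pairs a) f" by (simp add: dcycle_def Dl_def)
lemma dall_Dl: "dall bs f = Dl (concat (map cycle_pairs bs)) f"
  by (induction bs) (simp_all add: dall_def dcycle_Dl Dl_append)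

lemma S_Dl: "S f \<Longrightarrow> S (Dl ds f)"
  by (induction ds) (auto simp: S_pd)

lemma Dl_add: "S f \<Longrightarrow> S g \<Longrightarrow> Dl ds (\<lambda>J. f J + g J) = (\<lambda>J. Dl ds f J + Dl ds g J)"
  by (induction ds) (auto simp: pd_add S_Dl)
lemma Dl_minus: "S f \<Longrightarrow> S g \<Longrightarrow> Dl ds (\<lambda>J. f J - g J) = (\<lambda>J. Dl ds f J - Dl ds g J)"
  by (induction ds) (auto simp: pd_minus S_Dl)
lemma Dl_cmult: "S f \<Longrightarrow> Dl ds (\<lambda>J. c * f J) = (\<lambda>J. c * Dl ds f J)"
  by (induction ds) (auto simp: pd_cmult S_Dl)
lemma Dl_sum: "(\<And>i. i \<in> A \<Longrightarrow> S (f i)) \<Longrightarrow> Dl ds (\<lambda>J. \<Sum>i\<in>A. f i J) = (\<lambda>J. \<Sum>i\<in>A. Dl ds (f i) J)"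
  by (induction ds) (auto simp: pd_sum S_Dl)
lemma Dl_const: "ds \<noteq> [] \<Longrightarrow> Dl ds (\<lambda>J. c) = (\<lambda>J. 0)"
proof (induction ds)
  case Nil then show ?case by simp
next
  case (Cons d ds) then show ?case by (cases d; cases "ds = []") auto
qed
lemma Dl_zero[simp]: "Dl ds (\<lambda>J. 0) = (\<lambda>J. 0)"
  by (induction ds) auto

lemma Dl_pd_comm: "S f \<Longrightarrow> Dl ds (pd m n f) = pd m n (Dl ds f)"
  by (induction ds) (auto simp: pd_comm S_Dl)

lemma pd_if: "pd m n (\<lambda>J. if P then f J else 0) = (\<lambda>J. if P then pd m n f J else 0)"
  by (cases P) auto

lemma Dl_coord_mult:
  assumes "distinct ds" "S h"
  shows "Dl ds (\<lambda>J. J a b * h J) = (\<lambda>J. J a b * Dl ds h J + (if (a,b) \<in> set ds then Dl (remove1 (a,b) ds) h J else 0))"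
  using assms(1)
proof (induction ds)
  case Nil then show ?case by simp
next
  case (Cons d ds)
  obtain m n where d: "d = (m,n)" by (cases d)
  have Sds: "S (Dl ds h)" using S_Dl assms(2) by blast
  have Sr: "S (\<lambda>J. if (a,b) \<in> set ds then Dl (remove1 (a,b) ds) h J else 0)"
    by (cases "(a,b) \<in> set ds") (auto intro: S_Dl assms(2) S_const)
  have "Dl (d # ds) (\<lambda>J. J a b * h J) = pd m n (\<lambda>J. J a b * Dl ds h J + (if (a,b) \<in> set ds then Dl (remove1 (a,b) ds) h J else 0))"
    using Cons by (simp add: d)
  also have "\<dots> = (\<lambda>J. (if a = m \<and> b = n then 1 else 0) * Dl ds h J + J a b * pd m n (Dl ds h) J
       + (if (a,b) \<in> set ds then pd m n (Dl (remove1 (a,b) ds) h) J else 0))"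
    by (simp add: pd_add pd_mult Sds Sr S_mult S_coord pd_coord pd_if)
  also have "\<dots> = (\<lambda>J. J a b * Dl (d # ds) h J + (if (a,b) \<in> set (d # ds) then Dl (remove1 (a,b) (d # ds)) h J else 0))"
    using Cons.prems by (auto simp: d)
  finally show ?case .
qed

lemma continuous_coord: "continuous_on UNIV (\<lambda>J::src. J a b)"
proof -
  have "continuous_on UNIV ((\<lambda>g. g b) \<circ> (\<lambda>J::src. J a))"
    by (rule continuous_on_compose) (auto intro: continuous_on_subset[OF continuous_on_product_coordinates])
  thus ?thesis by (simp add: o_def)
qed

lemma S_continuous: "S f \<Longrightarrow> continuous_on UNIV f"
  by (induction rule: S.induct) (auto intro!: continuous_intros continuous_coord)

lemma continuous_upd: "continuous_on UNIV (upd J m n)"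
  unfolding upd_def
  apply (intro continuous_on_coordinatewise_then_product)
  subgoal for i ia by (cases "i = m"; cases "ia = n") (auto intro: continuous_intros)
  done

lemma pd_local:
  assumes "open U" "\<And>J. J \<in> U \<Longrightarrow> f J = g J" "J \<in> U"
  shows "pd m n f J = pd m n g J"
proof -
  have "open (upd J m n -` U)"
    using continuous_upd[of J m n] assms(1) by (simp add: continuous_on_open_vimage)
  moreover have "J m n \<in> upd J m n -` U" using assms(3) by simp
  ultimately have "eventually (\<lambda>z. z \<in> upd J m n -` U) (nhds (J m n))"
    by (rule eventually_nhds_in_open)
  hence "eventually (\<lambda>z. f (upd J m n z) = g (upd J m n z)) (nhds (J m n))"
    by eventually_elim (use assms(2) in auto)
  thus ?thesis unfolding pd_upd by (rule deriv_cong_ev) simp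
qed

lemma Dl_local:
  assumes "open U" "\<And>J. J \<in> U \<Longrightarrow> f J = g J" "J \<in> U"
  shows "Dl ds f J = Dl ds g J"
  using assms(3)
proof (induction ds arbitrary: J)
  case Nil then show ?case using assms(2) by simp
next
  case (Cons d ds) then show ?case
    by (cases d) (auto intro: pd_local[OF assms(1)])
qed


lemma pd_coord_mult: "S h \<Longrightarrow> pd m n (\<lambda>J. J a b * h J) = (\<lambda>J. (if a = m \<and> b = n then h J else 0) + J a b * pd m n h J)"
  by (rule ext) (simp add: pd_mult S_coord pd_coord)

lemma S_sum3: "(\<And>i j k. S (f i j k)) \<Longrightarrow> S (\<lambda>J. \<Sum>i\<in>A. \<Sum>j\<in>B. \<Sum>k\<in>C. f i j k J)"
  by (intro S_sum)
lemma pd_sum3: "(\<And>i j k. S (f i j k)) \<Longrightarrow> pd a b (\<lambda>J. \<Sum>i\<in>A. \<Sum>j\<in>B. \<Sum>k\<in>C. f i j k J)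
   = (\<lambda>J. \<Sum>i\<in>A. \<Sum>j\<in>B. \<Sum>k\<in>C. pd a b (f i j k) J)"
  by (simp add: pd_sum S_sum)

lemma S_Delta: "S f \<Longrightarrow> S (Delta NN f)"
  unfolding Delta_def by (intro S_sum S_pd)
lemma S_Delta_pow: "S f \<Longrightarrow> S ((Delta NN ^^ k) f)"
  by (induction k) (auto simp: S_Delta)

lemma Delta_add: "S f \<Longrightarrow> S g \<Longrightarrow> Delta NN (\<lambda>J. f J + g J) = (\<lambda>J. Delta NN f J + Delta NN g J)"
  unfolding Delta_def by (auto simp: pd_add S_pd sum.distrib)
lemma Delta_minus: "S f \<Longrightarrow> S g \<Longrightarrow> Delta NN (\<lambda>J. f J - g J) = (\<lambda>J. Delta NN f J - Delta NN g J)"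
  unfolding Delta_def by (auto simp: pd_minus S_pd sum_subtractf)
lemma Delta_cmult: "S f \<Longrightarrow> Delta NN (\<lambda>J. c * f J) = (\<lambda>J. c * Delta NN f J)"
  unfolding Delta_def by (auto simp: pd_cmult S_pd sum_distrib_left)
lemma Delta_sum: "(\<And>i. i \<in> A \<Longrightarrow> S (f i)) \<Longrightarrow> Delta NN (\<lambda>J. \<Sum>i\<in>A. f i J) = (\<lambda>J. \<Sum>i\<in>A. Delta NN (f i) J)"
proof -
  assume a: "\<And>i. i \<in> A \<Longrightarrow> S (f i)"
  have "Delta NN (\<lambda>J. \<Sum>i\<in>A. f i J) = (\<lambda>J. \<Sum>m\<le>NN. \<Sum>n\<le>NN. \<Sum>k\<le>NN. \<Sum>i\<in>A. pd m n (pd n k (pd k m (f i))) J)"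
    unfolding Delta_def using a by (simp add: pd_sum S_pd)
  also have "\<dots> = (\<lambda>J. \<Sum>i\<in>A. Delta NN (f i) J)"
    unfolding Delta_def
    by (rule ext) (simp add: sum.swap[of _ A])
  finally show ?thesis .
qed
lemma Delta_pd_comm: "S f \<Longrightarrow> Delta NN (pd a b f) = pd a b (Delta NN f)"
  unfolding Delta_def by (simp add: pd_sum3 S_pd pd_comm)
lemma Delta_Dl_comm: "S f \<Longrightarrow> Delta NN (Dl ds f) = Dl ds (Delta NN f)"
  by (induction ds) (auto simp: Delta_pd_comm S_Dl)

definition Cop :: "nat \<Rightarrow> nat \<Rightarrow> nat \<Rightarrow> (src \<Rightarrow> complex) \<Rightarrow> src \<Rightarrow> complex" where
  "Cop NN p q f = (\<lambda>J. \<Sum>l\<le>NN. pd p l (pd l q f) J)"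

definition Lop :: "nat \<Rightarrow> nat \<Rightarrow> nat \<Rightarrow> (src \<Rightarrow> complex) \<Rightarrow> src \<Rightarrow> complex" where
  "Lop NN p q f = (\<lambda>J. \<Sum>l\<le>NN. J l p * pd l q f J - J q l * pd p l f J)"

lemma S_Cop: "S f \<Longrightarrow> S (Cop NN p q f)"
  unfolding Cop_def by (intro S_sum S_pd)
lemma S_Lop: "S f \<Longrightarrow> S (Lop NN p q f)"
  unfolding Lop_def by (intro S_sum S_minus S_mult S_coord S_pd)

lemma Delta_Cop_comm: "S f \<Longrightarrow> Delta NN (Cop NN p q f) = Cop NN p q (Delta NN f)"
  unfolding Cop_def by (simp add: Delta_sum S_pd Delta_pd_comm)

lemma pd3_coord_mult:
  assumes "S h"
  shows "pd x1 y1 (pd x2 y2 (pd x3 y3 (\<lambda>J. J a b * h J))) = (\<lambda>J. J a b * pd x1 y1 (pd x2 y2 (pd x3 y3 h)) J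
     + (if a = x1 \<and> b = y1 then pd x2 y2 (pd x3 y3 h) J else 0)
     + (if a = x2 \<and> b = y2 then pd x1 y1 (pd x3 y3 h) J else 0)
     + (if a = x3 \<and> b = y3 then pd x1 y1 (pd x2 y2 h) J else 0))"
proof -
  have S1: "S (pd x3 y3 h)" "S (pd x2 y2 (pd x3 y3 h))" "S (pd x1 y1 h)" "S (pd x2 y2 h)" "S (pd x3 y3 h)"
    "S (pd x1 y1 (pd x3 y3 h))"
    using assms by (auto intro: S_pd)
  have Sif: "\<And>P g. S g \<Longrightarrow> S (\<lambda>J. if P then g J else 0)"
    by (case_tac P) (auto intro: S_const)
  show ?thesis
    using assms S1
    by (simp add: pd_coord_mult pd_add pd_if S_mult S_coord S_add Sif S_pd add_ac)
qed

lemma sum_if_const: "(\<Sum>x\<in>A. if P then f x else 0) = (if P then sum f A else (0::'a::comm_monoid_add))"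
  by simp
lemma ddelta: "finite A \<Longrightarrow> finite B \<Longrightarrow> a \<in> A \<Longrightarrow> b \<in> B \<Longrightarrow>
  (\<Sum>n\<in>A. \<Sum>k\<in>B. if a = n \<and> b = k then X n k else (0::'a::comm_monoid_add)) = X a b"
proof -
  assume h: "finite A" "finite B" "a \<in> A" "b \<in> B"
  have "(\<Sum>n\<in>A. \<Sum>k\<in>B. if a = n \<and> b = k then X n k else 0) = (\<Sum>n\<in>A. if a = n then (\<Sum>k\<in>B. if b = k then X n k else 0) else 0)"
    by (intro sum.cong refl) auto
  also have "\<dots> = X a b" using h by (simp add: sum.delta)
  finally show ?thesis .
qed
lemma T1: "(a::nat) \<le> NN \<Longrightarrow> b \<le> NN \<Longrightarrow> (\<Sum>m\<le>NN. \<Sum>n\<le>NN. \<Sum>k\<le>NN. if a = m \<and> b = n then (g::nat\<Rightarrow>nat\<Rightarrow>nat\<Rightarrow>complex) n k m else 0) = (\<Sum>k\<le>NN. g b k a)"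
  by (simp only: sum_if_const) (rule ddelta; simp)
lemma T2: "(a::nat) \<le> NN \<Longrightarrow> b \<le> NN \<Longrightarrow> (\<Sum>m\<le>NN. \<Sum>n\<le>NN. \<Sum>k\<le>NN. if a = n \<and> b = k then (g::nat\<Rightarrow>nat\<Rightarrow>nat\<Rightarrow>complex) n k m else 0) = (\<Sum>m\<le>NN. g a b m)"
  by (intro sum.cong refl ddelta) auto
lemma T3: "(a::nat) \<le> NN \<Longrightarrow> b \<le> NN \<Longrightarrow> (\<Sum>m\<le>NN. \<Sum>n\<le>NN. \<Sum>k\<le>NN. if a = k \<and> b = m then (g::nat\<Rightarrow>nat\<Rightarrow>nat\<Rightarrow>complex) n k m else 0) = (\<Sum>n\<le>NN. g n a b)"
proof -
  assume h: "a \<le> NN" "b \<le> NN"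
  have "(\<Sum>m\<le>NN. \<Sum>n\<le>NN. \<Sum>k\<le>NN. if a = k \<and> b = m then g n k m else 0)
      = (\<Sum>n\<le>NN. \<Sum>m\<le>NN. \<Sum>k\<le>NN. if b = m \<and> a = k then g n k m else 0)"
    by (subst sum.swap) (simp add: conj_commute)
  also have "\<dots> = (\<Sum>n\<le>NN. g n a b)"
    using h by (intro sum.cong refl ddelta) auto
  finally show ?thesis .
qed

lemma Delta_coord_mult:
  assumes "S h" "a \<le> NN" "b \<le> NN"
  shows "Delta NN (\<lambda>J. J a b * h J) = (\<lambda>J. J a b * Delta NN h J + 3 * Cop NN b a h J)"
proof
  fix J
  let ?X = "\<lambda>m n k. J a b * pd m n (pd n k (pd k m h)) J"
  let ?I1 = "\<lambda>m n k. if a = m \<and> b = n then pd n k (pd k m h) J else 0"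
  let ?I2 = "\<lambda>m n k. if a = n \<and> b = k then pd m n (pd k m h) J else 0"
  let ?I3 = "\<lambda>m n k. if a = k \<and> b = m then pd m n (pd n k h) J else 0"
  have "Delta NN (\<lambda>J. J a b * h J) J = (\<Sum>m\<le>NN. \<Sum>n\<le>NN. \<Sum>k\<le>NN. ?X m n k + ?I1 m n k + ?I2 m n k + ?I3 m n k)"
    unfolding Delta_def using assms(1) by (simp add: pd3_coord_mult)
  also have "\<dots> = (\<Sum>m\<le>NN. \<Sum>n\<le>NN. \<Sum>k\<le>NN. ?X m n k) + (\<Sum>m\<le>NN. \<Sum>n\<le>NN. \<Sum>k\<le>NN. ?I1 m n k)
     + (\<Sum>m\<le>NN. \<Sum>n\<le>NN. \<Sum>k\<le>NN. ?I2 m n k) + (\<Sum>m\<le>NN. \<Sum>n\<le>NN. \<Sum>k\<le>NN. ?I3 m n k)"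
    by (simp only: sum.distrib)
  also have "(\<Sum>m\<le>NN. \<Sum>n\<le>NN. \<Sum>k\<le>NN. ?X m n k) = J a b * Delta NN h J"
    unfolding Delta_def by (simp add: sum_distrib_left)
  also have "(\<Sum>m\<le>NN. \<Sum>n\<le>NN. \<Sum>k\<le>NN. ?I1 m n k) = (\<Sum>k\<le>NN. pd b k (pd k a h) J)"
    using assms(2,3) by (rule T1[where g="\<lambda>n k m. pd n k (pd k m h) J"])
  also have "(\<Sum>m\<le>NN. \<Sum>n\<le>NN. \<Sum>k\<le>NN. ?I2 m n k) = (\<Sum>m\<le>NN. pd m a (pd b m h) J)"
    using assms(2,3) by (rule T2[where g="\<lambda>n k m. pd m n (pd k m h) J"])
  also have "\<dots> = (\<Sum>m\<le>NN. pd b m (pd m a h) J)"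
    using assms(1) by (simp add: pd_comm[of h b])
  also have "(\<Sum>m\<le>NN. \<Sum>n\<le>NN. \<Sum>k\<le>NN. ?I3 m n k) = (\<Sum>n\<le>NN. pd b n (pd n a h) J)"
    using assms(2,3) by (rule T3[where g="\<lambda>n k m. pd m n (pd n k h) J"])
  finally show "Delta NN (\<lambda>J. J a b * h J) J = J a b * Delta NN h J + 3 * Cop NN b a h J"
    unfolding Cop_def by simp
qed

lemma Cop_coord_mult:
  assumes "S h" "p \<noteq> q"
  shows "Cop NN p q (\<lambda>J. J q p * h J) = (\<lambda>J. J q p * Cop NN p q h J)"
  unfolding Cop_def using assms
  by (simp add: pd_coord_mult S_pd S_mult S_coord sum_distrib_left)

lemma Delta_pow_coord_mult:
  assumes "S h" "p \<noteq> q" "p \<le> NN" "q \<le> NN"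
  shows "(Delta NN ^^ k) (\<lambda>J. J q p * h J) = (\<lambda>J. J q p * (Delta NN ^^ k) h J + of_nat (3 * k) * Cop NN p q ((Delta NN ^^ (k - 1)) h) J)"
proof (induction k)
  case 0 then show ?case by simp
next
  case (Suc k)
  have S1: "S ((Delta NN ^^ k) h)" "S ((Delta NN ^^ (k-1)) h)" using assms(1) by (auto intro: S_Delta_pow)
  have "(Delta NN ^^ Suc k) (\<lambda>J. J q p * h J) = Delta NN (\<lambda>J. J q p * (Delta NN ^^ k) h J + of_nat (3 * k) * Cop NN p q ((Delta NN ^^ (k - 1)) h) J)"
    using Suc by simp
  also have "\<dots> = (\<lambda>J. J q p * (Delta NN ^^ Suc k) h J + 3 * Cop NN p q ((Delta NN ^^ k) h) J
     + of_nat (3 * k) * Cop NN p q ((Delta NN ^^ k) h) J)"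
  proof (cases k)
    case 0 then show ?thesis using assms S1
      by (simp add: Delta_coord_mult)
  next
    case (Suc k')
    then have "Delta NN (Cop NN p q ((Delta NN ^^ (k - 1)) h)) = Cop NN p q ((Delta NN ^^ k) h)"
      using S1 by (simp add: Delta_Cop_comm)
    have SC: "S (\<lambda>J. of_nat (3 * k) * Cop NN p q ((Delta NN ^^ (k - 1)) h) J)"
      using S1 by (intro S_cmult S_Cop)
    have "Delta NN (\<lambda>J. J q p * (Delta NN ^^ k) h J + of_nat (3 * k) * Cop NN p q ((Delta NN ^^ (k - 1)) h) J)
      = (\<lambda>J. Delta NN (\<lambda>J. J q p * (Delta NN ^^ k) h J) J + Delta NN (\<lambda>J. of_nat (3 * k) * Cop NN p q ((Delta NN ^^ (k - 1)) h) J) J)"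
      by (rule Delta_add[OF S_mult[OF S_coord S1(1)] SC])
    also have "\<dots> = (\<lambda>J. J q p * (Delta NN ^^ Suc k) h J + 3 * Cop NN p q ((Delta NN ^^ k) h) J
     + of_nat (3 * k) * Cop NN p q ((Delta NN ^^ k) h) J)"
      using S1 assms \<open>Delta NN (Cop NN p q ((Delta NN ^^ (k - 1)) h)) = Cop NN p q ((Delta NN ^^ k) h)\<close>
      by (simp add: Delta_cmult S_Cop Delta_coord_mult)
    finally show ?thesis .
  qed
  also have "\<dots> = (\<lambda>J. J q p * (Delta NN ^^ Suc k) h J + of_nat (3 * Suc k) * Cop NN p q ((Delta NN ^^ (Suc k - 1)) h) J)"
    by (rule ext) (simp add: algebra_simps)
  finally show ?case .
qed


lemma Delta_Lop_comm:
  assumes "S f" "p \<le> NN" "q \<le> NN"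
  shows "Delta NN (Lop NN p q f) = Lop NN p q (Delta NN f)"
proof
  fix J
  have Sg: "\<And>l. S (pd l q f)" "\<And>l. S (pd p l f)" using assms(1) by (auto intro: S_pd)
  have Sl: "\<And>l. S (\<lambda>J. J l p * pd l q f J - J q l * pd p l f J)"
    using Sg by (intro S_minus S_mult S_coord)
  have "Delta NN (Lop NN p q f) J = (\<Sum>l\<le>NN. Delta NN (\<lambda>J. J l p * pd l q f J - J q l * pd p l f J) J)"
    unfolding Lop_def using Sl by (simp add: Delta_sum)
  also have "\<dots> = (\<Sum>l\<le>NN. J l p * Delta NN (pd l q f) J + 3 * Cop NN p l (pd l q f) J
      - (J q l * Delta NN (pd p l f) J + 3 * Cop NN l q (pd p l f) J))"
  proof (rule sum.cong[OF refl])
    fix l assume l: "l \<in> {..NN}"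
    show "Delta NN (\<lambda>J. J l p * pd l q f J - J q l * pd p l f J) J = J l p * Delta NN (pd l q f) J + 3 * Cop NN p l (pd l q f) J
      - (J q l * Delta NN (pd p l f) J + 3 * Cop NN l q (pd p l f) J)"
      using l assms Sg by (simp add: Delta_minus S_mult S_coord Delta_coord_mult)
  qed
  also have "\<dots> = (\<Sum>l\<le>NN. J l p * pd l q (Delta NN f) J - J q l * pd p l (Delta NN f) J)
     + 3 * ((\<Sum>l\<le>NN. Cop NN p l (pd l q f) J) - (\<Sum>l\<le>NN. Cop NN l q (pd p l f) J))"
    using assms(1) by (simp add: Delta_pd_comm sum_subtractf sum.distrib sum_distrib_left algebra_simps)
  also have "(\<Sum>l\<le>NN. Cop NN l q (pd p l f) J) = (\<Sum>l\<le>NN. \<Sum>m\<le>NN. pd p l (pd l m (pd m q f)) J)"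
    unfolding Cop_def using assms(1) by (simp add: pd_comm S_pd)
  also have "(\<Sum>l\<le>NN. Cop NN p l (pd l q f) J) = (\<Sum>l\<le>NN. \<Sum>m\<le>NN. pd p l (pd l m (pd m q f)) J)"
    unfolding Cop_def by (rule sum.swap)
  finally show "Delta NN (Lop NN p q f) J = Lop NN p q (Delta NN f) J"
    unfolding Lop_def by simp
qed

lemma Delta_pow_Lop_comm:
  assumes "S f" "p \<le> NN" "q \<le> NN"
  shows "(Delta NN ^^ k) (Lop NN p q f) = Lop NN p q ((Delta NN ^^ k) f)"
  by (induction k) (auto simp: Delta_Lop_comm assms S_Delta_pow)

lemma Delta_pow_pd_comm:
  assumes "S f"
  shows "(Delta NN ^^ k) (pd a b f) = pd a b ((Delta NN ^^ k) f)"
  by (induction k) (auto simp: Delta_pd_comm assms S_Delta_pow)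

lemma Delta_pow_Cop_comm:
  assumes "S f"
  shows "(Delta NN ^^ k) (Cop NN p q f) = Cop NN p q ((Delta NN ^^ k) f)"
  by (induction k) (auto simp: Delta_Cop_comm assms S_Delta_pow)

lemma Delta_pow_cmult:
  assumes "S f"
  shows "(Delta NN ^^ k) (\<lambda>J. c * f J) = (\<lambda>J. c * (Delta NN ^^ k) f J)"
  by (induction k) (auto simp: Delta_cmult assms S_Delta_pow)



lemma ddelta1: "finite A \<Longrightarrow> finite B \<Longrightarrow> a \<in> A \<Longrightarrow> b \<in> B \<Longrightarrow>
  (\<Sum>n\<in>A. \<Sum>k\<in>B. if n = a \<and> k = b then X n k else (0::'a::comm_monoid_add)) = X a b"
proof -
  assume h: "finite A" "finite B" "a \<in> A" "b \<in> B"
  have "(\<Sum>n\<in>A. \<Sum>k\<in>B. if n = a \<and> k = b then X n k else 0) = (\<Sum>n\<in>A. \<Sum>k\<in>B. if a = n \<and> b = k then X n k else 0)"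
    by (intro sum.cong refl) auto
  thus ?thesis using ddelta[OF h, of X] by simp
qed
lemma ddelta2: "finite A \<Longrightarrow> finite B \<Longrightarrow> a \<in> A \<Longrightarrow> b \<in> B \<Longrightarrow>
  (\<Sum>n\<in>A. \<Sum>k\<in>B. if k = b \<and> n = a then X n k else (0::'a::comm_monoid_add)) = X a b"
proof -
  assume h: "finite A" "finite B" "a \<in> A" "b \<in> B"
  have "(\<Sum>n\<in>A. \<Sum>k\<in>B. if k = b \<and> n = a then X n k else 0) = (\<Sum>n\<in>A. \<Sum>k\<in>B. if a = n \<and> b = k then X n k else 0)"
    by (intro sum.cong refl) auto
  thus ?thesis using ddelta[OF h, of X] by simp
qed
definition wd :: "real \<Rightarrow> real \<Rightarrow> (nat \<Rightarrow> real) \<Rightarrow> nat \<Rightarrow> nat \<Rightarrow> src \<Rightarrow> complex" where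
  "wd V \<kappa> E m n J = complex_of_real (V / (E m + E n)) * (J n m - (if m = n then complex_of_real \<kappa> else 0))"

lemma S_W: "S (Wfree NN V \<kappa> E)"
  unfolding Wfree_def[abs_def]
  by (intro S_sum S_mult S_minus S_const S_coord)

lemma S_wd: "S (wd V \<kappa> E m n)"
  unfolding wd_def[abs_def]
  by (intro S_sum S_mult S_minus S_const S_coord)

lemma aux_if_lemma: "(x::complex) * ((if P then 1 else 0) * y + z * (if Q then 1 else 0)) = (if P then x*y else 0) + (if Q then x*z else 0)"
  by (simp add: distrib_left)

lemma two_div_lemma: "(x::complex) * 2 / (2*a + 2*b) = x / (a+b)"
proof -
  have "x*2/(2*a+2*b) = (2*x)/(2*(a+b))" by (simp add: algebra_simps)
  also have "\<dots> = x/(a+b)" by (rule mult_divide_mult_cancel_left) simp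
  finally show ?thesis .
qed

lemma pd_summand:
  "pd a b (\<lambda>J. A * (J n m - c) * B * (J m n - c)) =
   (\<lambda>J. (if n = a \<and> m = b then A * B * (J m n - c) else 0) + (if m = a \<and> n = b then A * B * (J n m - c) else 0))"
proof -
  have S1: "S (\<lambda>J. J n m - c)" "S (\<lambda>J. J m n - c)" by (intro S_minus S_coord S_const)+
  have S2: "S (\<lambda>J. (J n m - c) * (J m n - c))" using S1 by (rule S_mult)
  have e1: "(\<lambda>J. A * (J n m - c) * B * (J m n - c)) = (\<lambda>J. (A * B) * ((J n m - c) * (J m n - c)))"
    by (rule ext) (simp only: ac_simps)
  have p1: "pd a b (\<lambda>J. J n m - c) = (\<lambda>J. if n = a \<and> m = b then 1 else 0)"
    using pd_minus[OF S_coord S_const, of a b n m c] by (simp add: pd_coord)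
  have p2: "pd a b (\<lambda>J. J m n - c) = (\<lambda>J. if m = a \<and> n = b then 1 else 0)"
    using pd_minus[OF S_coord S_const, of a b m n c] by (simp add: pd_coord)
  have "pd a b (\<lambda>J. A * (J n m - c) * B * (J m n - c)) = (\<lambda>J. (A * B) * (pd a b (\<lambda>J. J n m - c) J * (J m n - c) + (J n m - c) * pd a b (\<lambda>J. J m n - c) J))"
    unfolding e1 pd_cmult[OF S2] pd_mult[OF S1] ..
  also have "\<dots> = (\<lambda>J. (if n = a \<and> m = b then A * B * (J m n - c) else 0) + (if m = a \<and> n = b then A * B * (J n m - c) else 0))"
    unfolding p1 p2 by (rule ext) (rule aux_if_lemma)
  finally show ?thesis .
qed

lemma pd_W:
  assumes "m \<le> NN" "n \<le> NN"
  shows "pd m n (Wfree NN V \<kappa> E) = wd V \<kappa> E m n"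
proof
  fix J
  let ?A = "complex_of_real (V/2)"
  let ?B = "\<lambda>m' n'. complex_of_real (1 / (E n' + E m'))"
  let ?c = "\<lambda>m' n'. (if n' = m' then complex_of_real \<kappa> else 0)"
  have Ss: "\<And>m' n'. S (\<lambda>J. ?A * (J n' m' - ?c m' n') * ?B m' n' * (J m' n' - ?c m' n'))"
    by (intro S_sum S_mult S_minus S_const S_coord)
  have "pd m n (Wfree NN V \<kappa> E) J = (\<Sum>m'\<le>NN. \<Sum>n'\<le>NN. pd m n (\<lambda>J. ?A * (J n' m' - ?c m' n') * ?B m' n' * (J m' n' - ?c m' n')) J)"
    unfolding Wfree_def[abs_def] using Ss by (simp add: pd_sum S_sum)
  also have "\<dots> = (\<Sum>m'\<le>NN. \<Sum>n'\<le>NN. (if n' = m \<and> m' = n then ?A * ?B m' n' * (J m' n' - ?c m' n') else 0))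
      + (\<Sum>m'\<le>NN. \<Sum>n'\<le>NN. (if m' = m \<and> n' = n then ?A * ?B m' n' * (J n' m' - ?c m' n') else 0))"
    by (simp only: pd_summand sum.distrib)
  also have "\<dots> = ?A * ?B n m * (J n m - ?c n m) + ?A * ?B m n * (J n m - ?c m n)"
    using assms by (simp only: ddelta1 ddelta2 finite_atMost atMost_iff)
  also have "\<dots> = wd V \<kappa> E m n J"
    unfolding wd_def
  proof -
    have e: "E n + E m = E m + E n" by simp
    show "?A * ?B n m * (J n m - ?c n m) + ?A * ?B m n * (J n m - ?c m n) =
      complex_of_real (V / (E m + E n)) * (J n m - (if m = n then complex_of_real \<kappa> else 0))"
      unfolding e by (simp add: eq_commute[of n m] divide_simps flip: of_real_mult of_real_add of_real_divide) (simp add: algebra_simps two_div_lemma)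
  qed
  finally show "pd m n (Wfree NN V \<kappa> E) J = wd V \<kappa> E m n J" .
qed


lemma ward_term:
  assumes Epos: "\<And>m. E m > 0" and V: "V \<noteq> 0" and pq: "p \<noteq> q"
  shows "complex_of_real ((E p - E q) / V) * (wd V \<kappa> E p l J * wd V \<kappa> E l q J)
    = J l p * wd V \<kappa> E l q J - J q l * wd V \<kappa> E p l J
      + complex_of_real (V * \<kappa> / (E p + E q)) * J q p * ((if l = q then 1 else 0) - (if l = p then 1 else 0))"
proof -
  have pos: "E p + E q > 0" "E p + E l > 0" "E l + E q > 0" "E p > 0" "E q > 0" "E l > 0" using Epos by (auto intro: add_pos_pos)
  have nz: "complex_of_real (E p) + complex_of_real (E q) \<noteq> 0"
           "complex_of_real (E p) + complex_of_real (E l) \<noteq> 0"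
           "complex_of_real (E l) + complex_of_real (E q) \<noteq> 0"
           "complex_of_real (E l) \<noteq> 0" "complex_of_real (E p) \<noteq> 0" "complex_of_real (E q) \<noteq> 0"
           "complex_of_real V \<noteq> 0"
    using pos V by (simp_all flip: of_real_add)
  show ?thesis
  proof (cases "l = p")
    case True
    then have "l \<noteq> q" using pq by simp
    then show ?thesis using True pq nz unfolding wd_def
      by (simp add: divide_simps) (simp add: algebra_simps)
  next
    case False
    show ?thesis
    proof (cases "l = q")
      case True
      then show ?thesis using False pq nz unfolding wd_def
        by (simp add: divide_simps) (simp add: algebra_simps)
    next
      case False2: False
      then show ?thesis using False pq nz unfolding wd_def
        by (simp add: divide_simps) (simp add: algebra_simps)
    qed
  qed
qed


definition eW :: "nat \<Rightarrow> real \<Rightarrow> real \<Rightarrow> (nat \<Rightarrow> real) \<Rightarrow> src \<Rightarrow> complex" where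
  "eW NN V \<kappa> E = (\<lambda>J. exp (Wfree NN V \<kappa> E J))"

lemma S_eW: "S (eW NN V \<kappa> E)"
  unfolding eW_def by (intro S_exp S_W)

lemma pd_eW: "m \<le> NN \<Longrightarrow> n \<le> NN \<Longrightarrow> pd m n (eW NN V \<kappa> E) = (\<lambda>J. eW NN V \<kappa> E J * wd V \<kappa> E m n J)"
  unfolding eW_def by (simp add: pd_exp S_W pd_W)

lemma sde_eW: "p \<le> NN \<Longrightarrow> q \<le> NN \<Longrightarrow> p \<noteq> q \<Longrightarrow>
  pd p q (eW NN V \<kappa> E) = (\<lambda>J. complex_of_real (V / (E p + E q)) * (J q p * eW NN V \<kappa> E J))"
  by (rule ext) (simp add: pd_eW wd_def)

lemma pd_wd: "p \<noteq> q \<Longrightarrow> pd p l (wd V \<kappa> E l q) = (\<lambda>J. 0)"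
proof -
  assume pq: "p \<noteq> q"
  have "pd p l (wd V \<kappa> E l q) = (\<lambda>J. complex_of_real (V / (E l + E q)) * pd p l (\<lambda>J. J q l - (if l = q then complex_of_real \<kappa> else 0)) J)"
    unfolding wd_def[abs_def] by (rule pd_cmult) (intro S_minus S_coord S_const)
  also have "\<dots> = (\<lambda>J. 0)"
    using pq by (simp add: pd_minus S_coord S_const pd_coord)
  finally show ?thesis .
qed

lemma pd_pd_eW: "p \<le> NN \<Longrightarrow> l \<le> NN \<Longrightarrow> q \<le> NN \<Longrightarrow> p \<noteq> q \<Longrightarrow>
  pd p l (pd l q (eW NN V \<kappa> E)) = (\<lambda>J. eW NN V \<kappa> E J * (wd V \<kappa> E p l J * wd V \<kappa> E l q J))"
  by (simp add: pd_eW pd_mult S_eW S_wd pd_wd mult.assoc)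

lemma ward_eW:
  assumes Epos: "\<And>m. E m > 0" and V: "V \<noteq> 0" and pq: "p \<noteq> q" "p \<le> NN" "q \<le> NN"
  shows "(\<lambda>J. complex_of_real ((E p - E q) / V) * Cop NN p q (eW NN V \<kappa> E) J) = Lop NN p q (eW NN V \<kappa> E)"
proof
  fix J
  let ?e = "eW NN V \<kappa> E J"
  let ?K = "complex_of_real (V * \<kappa> / (E p + E q)) * J q p"
  have "complex_of_real ((E p - E q) / V) * Cop NN p q (eW NN V \<kappa> E) J
     = ?e * (\<Sum>l\<le>NN. complex_of_real ((E p - E q) / V) * (wd V \<kappa> E p l J * wd V \<kappa> E l q J))"
    unfolding Cop_def using pq by (simp add: pd_pd_eW sum_distrib_left algebra_simps)
  also have "\<dots> = ?e * (\<Sum>l\<le>NN. (J l p * wd V \<kappa> E l q J - J q l * wd V \<kappa> E p l J)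
      + ?K * ((if l = q then 1 else 0) - (if l = p then 1 else 0)))"
  proof -
    have "\<And>l. complex_of_real ((E p - E q) / V) * (wd V \<kappa> E p l J * wd V \<kappa> E l q J) =
      (J l p * wd V \<kappa> E l q J - J q l * wd V \<kappa> E p l J) + ?K * ((if l = q then 1 else 0) - (if l = p then 1 else 0))"
      using ward_term[of E V p q, OF Epos V pq(1)] by (simp add: mult.assoc)
    then show ?thesis by simp
  qed
  also have "\<dots> = ?e * ((\<Sum>l\<le>NN. (J l p * wd V \<kappa> E l q J - J q l * wd V \<kappa> E p l J))
      + (\<Sum>l\<le>NN. ?K * ((if l = q then 1 else 0) - (if l = p then 1 else 0))))"
    by (simp only: sum.distrib)
  also have "(\<Sum>l\<le>NN. ?K * ((if l = q then 1 else 0) - (if l = p then 1 else 0))) = ?K * 0"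
  proof -
    have "(\<Sum>l\<le>NN. ((if l = q then 1 else 0) - (if l = p then 1 else (0::complex)))) = (\<Sum>l\<le>NN. (if l = q then 1 else 0)) - (\<Sum>l\<le>NN. if l = p then 1 else 0)"
      by (rule sum_subtractf)
    also have "\<dots> = 0" using pq by (simp add: sum.delta')
    finally have z: "(\<Sum>l\<le>NN. ((if l = q then 1 else 0) - (if l = p then 1 else (0::complex)))) = 0" .
    show ?thesis by (simp only: sum_distrib_left[symmetric] z)
  qed
  also have "?e * ((\<Sum>l\<le>NN. (J l p * wd V \<kappa> E l q J - J q l * wd V \<kappa> E p l J)) + ?K * 0)
     = Lop NN p q (eW NN V \<kappa> E) J"
    unfolding Lop_def using pq by (simp add: pd_eW sum_distrib_left algebra_simps)
  finally show "complex_of_real ((E p - E q) / V) * Cop NN p q (eW NN V \<kappa> E) J = Lop NN p q (eW NN V \<kappa> E) J" .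
qed


definition goodf :: "(src \<Rightarrow> complex fps) \<Rightarrow> bool" where
  "goodf P \<longleftrightarrow> (\<forall>k. S (\<lambda>J. P J $ k))"

definition pdf :: "nat \<Rightarrow> nat \<Rightarrow> (src \<Rightarrow> complex fps) \<Rightarrow> src \<Rightarrow> complex fps" where
  "pdf m n P = (\<lambda>J. Abs_fps (\<lambda>k. pd m n (\<lambda>J'. P J' $ k) J))"

lemma pdf_nth: "pdf m n P J $ k = pd m n (\<lambda>J. P J $ k) J"
  by (simp add: pdf_def)

lemma goodfD: "goodf P \<Longrightarrow> S (\<lambda>J. P J $ k)"
  by (simp add: goodf_def)

lemma goodf_pdf: "goodf P \<Longrightarrow> goodf (pdf m n P)"
  unfolding goodf_def pdf_nth by (auto intro: S_pd)

lemma goodf_add: "goodf P \<Longrightarrow> goodf Q \<Longrightarrow> goodf (\<lambda>J. P J + Q J)"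
  unfolding goodf_def by (auto intro: S_add)
lemma goodf_minus: "goodf P \<Longrightarrow> goodf Q \<Longrightarrow> goodf (\<lambda>J. P J - Q J)"
  unfolding goodf_def by (auto intro: S_minus)
lemma goodf_mult: "goodf P \<Longrightarrow> goodf Q \<Longrightarrow> goodf (\<lambda>J. P J * Q J)"
  unfolding goodf_def fps_mult_nth by (auto intro!: S_sum S_mult)
lemma goodf_cfps: "goodf (\<lambda>J. F)"
  unfolding goodf_def by (auto intro: S_const)
lemma S_if: "S f \<Longrightarrow> S (\<lambda>J. if P then f J else 0)"
  by (cases P) (auto intro: S_const)

lemma goodf_fps_const: "S f \<Longrightarrow> goodf (\<lambda>J. fps_const (f J))"
  unfolding goodf_def by (auto intro: S_if)
lemma goodf_deriv: "goodf P \<Longrightarrow> goodf (\<lambda>J. fps_deriv (P J))"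
  unfolding goodf_def by (auto intro: S_cmult)

lemma pdf_add: "goodf P \<Longrightarrow> goodf Q \<Longrightarrow> pdf m n (\<lambda>J. P J + Q J) = (\<lambda>J. pdf m n P J + pdf m n Q J)"
  by (auto intro!: ext fps_ext simp: pdf_nth pd_add goodfD)
lemma pdf_minus: "goodf P \<Longrightarrow> goodf Q \<Longrightarrow> pdf m n (\<lambda>J. P J - Q J) = (\<lambda>J. pdf m n P J - pdf m n Q J)"
  by (auto intro!: ext fps_ext simp: pdf_nth pd_minus goodfD)
lemma pdf_cfps: "pdf m n (\<lambda>J. F) = (\<lambda>J. 0)"
  by (auto intro!: ext fps_ext simp: pdf_nth)
lemma pdf_fps_const: "S f \<Longrightarrow> pdf m n (\<lambda>J. fps_const (f J)) = (\<lambda>J. fps_const (pd m n f J))"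
proof (intro ext fps_ext)
  fix J k assume "S f"
  show "pdf m n (\<lambda>J. fps_const (f J)) J $ k = fps_const (pd m n f J) $ k"
    by (cases "k = 0") (simp_all add: pdf_nth)
qed
lemma pdf_deriv: "goodf P \<Longrightarrow> pdf m n (\<lambda>J. fps_deriv (P J)) = (\<lambda>J. fps_deriv (pdf m n P J))"
  by (auto intro!: ext fps_ext simp: pdf_nth pd_cmult goodfD)
lemma pdf_mult: "goodf P \<Longrightarrow> goodf Q \<Longrightarrow> pdf m n (\<lambda>J. P J * Q J) = (\<lambda>J. pdf m n P J * Q J + P J * pdf m n Q J)"
proof (intro ext fps_ext)
  fix J k
  assume P: "goodf P" and Q: "goodf Q"
  have "pdf m n (\<lambda>J. P J * Q J) J $ k = pd m n (\<lambda>J. \<Sum>i=0..k. P J $ i * Q J $ (k - i)) J"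
    by (simp add: pdf_nth fps_mult_nth)
  also have "\<dots> = (\<Sum>i=0..k. pd m n (\<lambda>J. P J $ i) J * Q J $ (k - i) + P J $ i * pd m n (\<lambda>J. Q J $ (k - i)) J)"
    using P Q by (simp add: pd_sum pd_mult goodfD S_mult)
  also have "\<dots> = (pdf m n P J * Q J + P J * pdf m n Q J) $ k"
    by (simp add: fps_mult_nth pdf_nth sum.distrib)
  finally show "pdf m n (\<lambda>J. P J * Q J) J $ k = (pdf m n P J * Q J + P J * pdf m n Q J) $ k" .
qed


lemma goodf_inverse:
  fixes P :: "src \<Rightarrow> complex fps"
  assumes P: "goodf P" and i: "S (\<lambda>J. inverse (P J $ 0))"
  shows "goodf (\<lambda>J. inverse (P J))"
proof -
  have "S (\<lambda>J. natfun_inverse (P J) k)" for k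
  proof (induction k rule: less_induct)
    case (less k)
    show ?case
    proof (cases k)
      case 0 then show ?thesis using i by simp
    next
      case (Suc n)
      have "S (\<lambda>J. - inverse (P J $ 0) * (\<Sum>j\<in>{1..Suc n}. P J $ j * natfun_inverse (P J) (Suc n - j)))"
        using less Suc P i by (intro S_mult S_sum S_minus[of "\<lambda>J. 0", simplified] S_const goodfD) auto
      then show ?thesis using Suc by simp
    qed
  qed
  then show ?thesis unfolding goodf_def by (simp add: fps_inverse_def)
qed

lemma pdf_inverse:
  fixes P :: "src \<Rightarrow> complex fps"
  assumes P: "goodf P" and i: "S (\<lambda>J. inverse (P J $ 0))" and nz: "\<And>J. P J $ 0 \<noteq> 0"
  shows "pdf m n (\<lambda>J. inverse (P J)) = (\<lambda>J. - (pdf m n P J * inverse (P J) * inverse (P J)))"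
proof
  fix J
  have G: "goodf (\<lambda>J. inverse (P J))" using goodf_inverse[OF P i] .
  have one: "(\<lambda>J. P J * inverse (P J)) = (\<lambda>J. 1)" using nz by (auto intro: inverse_mult_eq_1')
  have "pdf m n (\<lambda>J. P J * inverse (P J)) J = 0"
    unfolding one by (simp add: pdf_cfps)
  hence e: "pdf m n P J * inverse (P J) + P J * pdf m n (\<lambda>J. inverse (P J)) J = 0"
    using pdf_mult[OF P G, of m n] by metis
  have ip: "inverse (P J) * P J = 1" using nz by (rule inverse_mult_eq_1)
  have "pdf m n (\<lambda>J. inverse (P J)) J = (inverse (P J) * P J) * pdf m n (\<lambda>J. inverse (P J)) J"
    using ip by simp
  also have "\<dots> = inverse (P J) * (P J * pdf m n (\<lambda>J. inverse (P J)) J)" by (simp add: mult.assoc)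
  also have "P J * pdf m n (\<lambda>J. inverse (P J)) J = - (pdf m n P J * inverse (P J))"
    using e by (simp add: eq_neg_iff_add_eq_0 add.commute)
  finally show "pdf m n (\<lambda>J. inverse (P J)) J = - (pdf m n P J * inverse (P J) * inverse (P J))"
    by (simp add: algebra_simps)
qed


lemma fps_ln_compose_deriv:
  fixes H :: "complex fps"
  assumes "H $ 0 = 0"
  shows "fps_deriv (fps_ln 1 oo H) = inverse (1 + H) * fps_deriv H"
proof -
  have "fps_deriv (fps_ln 1 oo H) = (fps_deriv (fps_ln 1) oo H) * fps_deriv H"
    using assms by (rule fps_compose_deriv)
  also have "fps_deriv (fps_ln (1::complex)) = inverse (1 + fps_X)"
    by (simp add: fps_ln_deriv)
  also have "inverse (1 + fps_X) oo H = inverse ((1 + fps_X) oo H)"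
    using assms by (intro fps_inverse_compose) auto
  also have "(1 + fps_X) oo H = 1 + H"
    using assms by (simp add: fps_compose_add_distrib)
  finally show ?thesis .
qed

lemma goodf_one_plus_inverse:
  fixes H :: "src \<Rightarrow> complex fps"
  assumes H: "goodf H" and H0: "\<And>J. H J $ 0 = 0"
  shows "goodf (\<lambda>J. inverse (1 + H J))"
  using H0 by (intro goodf_inverse goodf_add goodf_cfps H) (simp add: S_const)

lemma goodf_log:
  fixes H :: "src \<Rightarrow> complex fps"
  assumes H: "goodf H" and H0: "\<And>J. H J $ 0 = 0"
  shows "goodf (\<lambda>J. fps_ln 1 oo H J)"
  unfolding goodf_def
proof
  fix k
  show "S (\<lambda>J. (fps_ln 1 oo H J) $ k)"
  proof (cases k)
    case 0 then show ?thesis by (simp add: S_const)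
  next
    case (Suc n)
    have G: "goodf (\<lambda>J. inverse (1 + H J) * fps_deriv (H J))"
      by (intro goodf_mult goodf_one_plus_inverse goodf_deriv H H0)
    have "\<And>J. (fps_ln 1 oo H J) $ Suc n = inverse (of_nat (Suc n)) * (inverse (1 + H J) * fps_deriv (H J)) $ n"
    proof -
      fix J
      have "fps_deriv (fps_ln 1 oo H J) $ n = (inverse (1 + H J) * fps_deriv (H J)) $ n"
        using H0 by (simp only: fps_ln_compose_deriv)
      hence "of_nat (Suc n) * (fps_ln 1 oo H J) $ Suc n = (inverse (1 + H J) * fps_deriv (H J)) $ n"
        by simp
      thus "(fps_ln 1 oo H J) $ Suc n = inverse (of_nat (Suc n)) * (inverse (1 + H J) * fps_deriv (H J)) $ n"
        by (simp add: field_simps del: of_nat_Suc)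
    qed
    then show ?thesis using Suc G by (simp add: S_cmult goodfD del: of_nat_Suc)
  qed
qed

lemma pdf_log:
  fixes H :: "src \<Rightarrow> complex fps"
  assumes H: "goodf H" and H0: "\<And>J. H J $ 0 = 0"
  shows "pdf m n (\<lambda>J. fps_ln 1 oo H J) = (\<lambda>J. pdf m n H J * inverse (1 + H J))"
proof
  fix J
  let ?P = "\<lambda>J. fps_ln 1 oo H J"
  let ?I = "\<lambda>J. inverse (1 + H J)"
  have GP: "goodf ?P" by (rule goodf_log[OF H H0])
  have GI: "goodf ?I" by (rule goodf_one_plus_inverse[OF H H0])
  have G1: "goodf (\<lambda>J. 1 + H J)" by (intro goodf_add goodf_cfps H)
  have S1: "S (\<lambda>J. inverse ((1 + H J) $ 0))" using H0 by (simp add: S_const)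
  have nz: "\<And>J. (1 + H J) $ 0 \<noteq> 0" using H0 by simp
  have pdf1: "pdf m n (\<lambda>J. 1 + H J) = pdf m n H"
    using pdf_add[OF goodf_cfps H, of m n 1] by (simp add: pdf_cfps)
  have dP: "(\<lambda>J. fps_deriv (?P J)) = (\<lambda>J. ?I J * fps_deriv (H J))"
    using H0 by (simp add: fps_ln_compose_deriv)
  have "fps_deriv (pdf m n ?P J) = pdf m n (\<lambda>J. fps_deriv (?P J)) J"
    using pdf_deriv[OF GP, of m n] by simp
  also have "\<dots> = pdf m n (\<lambda>J. ?I J * fps_deriv (H J)) J" unfolding dP ..
  also have "\<dots> = pdf m n ?I J * fps_deriv (H J) + ?I J * fps_deriv (pdf m n H J)"
    using pdf_mult[OF GI goodf_deriv[OF H], of m n] pdf_deriv[OF H, of m n] by simp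
  also have "pdf m n ?I J = - (pdf m n H J * ?I J * ?I J)"
    using pdf_inverse[OF G1 S1 nz, of m n] pdf1 by simp
  also have "- (pdf m n H J * ?I J * ?I J) * fps_deriv (H J) + ?I J * fps_deriv (pdf m n H J)
      = fps_deriv (pdf m n H J * ?I J)"
    using nz[of J] by (simp add: fps_inverse_deriv power2_eq_square algebra_simps)
  finally have d: "fps_deriv (pdf m n ?P J) = fps_deriv (pdf m n H J * ?I J)" .
  have z1: "pdf m n ?P J $ 0 = 0" by (simp add: pdf_nth)
  have z2: "(pdf m n H J * ?I J) $ 0 = 0" using H0 by (simp add: pdf_nth)
  have "pdf m n ?P J = fps_const (pdf m n ?P J $ 0 - (pdf m n H J * ?I J) $ 0) + pdf m n H J * ?I J"
    using d by (simp only: fps_deriv_eq_iff)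
  then show "pdf m n ?P J = pdf m n H J * ?I J"
    unfolding z1 z2 by simp
qed



lemma Lop_cmult: "S f \<Longrightarrow> Lop NN p q (\<lambda>J. c * f J) = (\<lambda>J. c * Lop NN p q f J)"
  unfolding Lop_def by (rule ext) (simp add: pd_cmult sum_distrib_left algebra_simps)
lemma Cop_cmult: "S f \<Longrightarrow> Cop NN p q (\<lambda>J. c * f J) = (\<lambda>J. c * Cop NN p q f J)"
  unfolding Cop_def by (rule ext) (simp add: pd_cmult S_pd sum_distrib_left)

lemma pde_c:
  assumes Epos: "\<And>m. E m > 0" and V: "V \<noteq> 0" and pq: "p \<noteq> q" "p \<le> NN" "q \<le> NN"
  shows "complex_of_real ((E p)\<^sup>2 - (E q)\<^sup>2) * pd p q ((Delta NN ^^ k) (eW NN V \<kappa> E)) J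
    = complex_of_real (V * (E p - E q)) * (J q p * (Delta NN ^^ k) (eW NN V \<kappa> E) J)
      + of_nat (3 * k) * complex_of_real (V\<^sup>2) * Lop NN p q ((Delta NN ^^ (k - 1)) (eW NN V \<kappa> E)) J"
proof -
  let ?e = "eW NN V \<kappa> E"
  let ?a = "complex_of_real (V / (E p + E q))"
  let ?b = "complex_of_real ((E p - E q) / V)"
  have Se: "S ?e" by (rule S_eW)
  have Sk: "\<And>k. S ((Delta NN ^^ k) ?e)" using Se by (rule S_Delta_pow)
  have "pd p q ((Delta NN ^^ k) ?e) = (Delta NN ^^ k) (pd p q ?e)"
    using Delta_pow_pd_comm[OF Se] by simp
  also have "\<dots> = (Delta NN ^^ k) (\<lambda>J. ?a * (J q p * ?e J))"
    using pq by (simp add: sde_eW)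
  also have "\<dots> = (\<lambda>J. ?a * (Delta NN ^^ k) (\<lambda>J. J q p * ?e J) J)"
    by (rule Delta_pow_cmult) (intro S_mult S_coord Se)
  also have "\<dots> = (\<lambda>J. ?a * (J q p * (Delta NN ^^ k) ?e J + of_nat (3 * k) * Cop NN p q ((Delta NN ^^ (k - 1)) ?e) J))"
    using Delta_pow_coord_mult[OF Se pq] by simp
  finally have d: "pd p q ((Delta NN ^^ k) ?e) J = ?a * (J q p * (Delta NN ^^ k) ?e J + of_nat (3 * k) * Cop NN p q ((Delta NN ^^ (k - 1)) ?e) J)"
    by simp
  have "Lop NN p q ((Delta NN ^^ (k - 1)) ?e) = (Delta NN ^^ (k - 1)) (Lop NN p q ?e)"
    using Delta_pow_Lop_comm[OF Se pq(2,3)] by simp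
  also have "\<dots> = (Delta NN ^^ (k - 1)) (\<lambda>J. ?b * Cop NN p q ?e J)"
    using ward_eW[where E=E and V=V and \<kappa>=\<kappa> and NN=NN and p=p and q=q, OF Epos V pq] by simp
  also have "\<dots> = (\<lambda>J. ?b * (Delta NN ^^ (k - 1)) (Cop NN p q ?e) J)"
    by (rule Delta_pow_cmult[OF S_Cop[OF Se]])
  also have "\<dots> = (\<lambda>J. ?b * Cop NN p q ((Delta NN ^^ (k - 1)) ?e) J)"
    by (simp only: Delta_pow_Cop_comm[OF Se])
  finally have l: "Lop NN p q ((Delta NN ^^ (k - 1)) ?e) J = ?b * Cop NN p q ((Delta NN ^^ (k - 1)) ?e) J"
    by simp
  have r1: "complex_of_real ((E p)\<^sup>2 - (E q)\<^sup>2) * ?a = complex_of_real (V * (E p - E q))"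
  proof -
    have "E p + E q \<noteq> 0" using Epos[of p] Epos[of q] by simp
    hence "((E p)\<^sup>2 - (E q)\<^sup>2) * (V / (E p + E q)) = V * (E p - E q)"
      by (simp add: power2_eq_square field_simps)
    thus ?thesis by (metis of_real_mult)
  qed
  have r2: "complex_of_real (V * (E p - E q)) = complex_of_real (V\<^sup>2) * ?b"
  proof -
    have "V * (E p - E q) = V\<^sup>2 * ((E p - E q) / V)" using V by (simp add: power2_eq_square field_simps)
    thus ?thesis by (metis of_real_mult)
  qed
  have gen: "(R::complex) * (a * (X + n * C)) = VE * X + n * V2 * (b * C)" if h1: "R * a = VE" and h2: "VE = V2 * b" for R a X n C b V2 VE
  proof -
    have "R * (a * (X + n * C)) = (R * a) * X + n * ((R * a) * C)" by (simp add: algebra_simps)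
    also have "\<dots> = VE * X + n * ((V2 * b) * C)" using h1 h2 by simp
    finally show ?thesis by (simp add: mult.assoc)
  qed
  show ?thesis
    unfolding d l by (rule gen[OF r1 r2])
qed


lemma Zfps_nth: "Zfps NN V \<kappa> E J $ k = complex_of_real (- 1 / (3 * V\<^sup>2)) ^ k / of_nat (fact k) * (Delta NN ^^ k) (eW NN V \<kappa> E) J"
  by (simp add: Zfps_def eW_def)

lemma S_Zc: "S (\<lambda>J. Zfps NN V \<kappa> E J $ k)"
  unfolding Zfps_nth by (intro S_cmult S_Delta_pow S_eW)

lemma goodf_Z: "goodf (Zfps NN V \<kappa> E)"
  unfolding goodf_def using S_Zc by blast

lemma scalar_gen:
  fixes t v F n :: complex
  assumes "t * (3 * v) = -1" "F \<noteq> 0" "n \<noteq> 0"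
  shows "t * t ^ j / (n * F) * (3 * n * v) = - (t ^ j / F)"
proof -
  have "t * t ^ j / (n * F) * (3 * n * v) = (t * (3 * v)) * (t ^ j / F) * (n / n)"
    using assms(2,3) by (simp add: field_simps)
  also have "\<dots> = - (t ^ j / F)" using assms by simp
  finally show ?thesis .
qed

lemma scalar_id:
  assumes V: "V \<noteq> 0"
  shows "complex_of_real (- 1 / (3 * V\<^sup>2)) ^ Suc j / of_nat (fact (Suc j)) * (of_nat (3 * Suc j) * complex_of_real (V\<^sup>2))
     = - (complex_of_real (- 1 / (3 * V\<^sup>2)) ^ j / of_nat (fact j))"
proof -
  let ?t = "complex_of_real (- 1 / (3 * V\<^sup>2))"
  have t: "?t * (3 * complex_of_real (V\<^sup>2)) = -1"
  proof -
    have "(- 1 / (3 * V\<^sup>2)) * (3 * V\<^sup>2) = -1" using V by simp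
    thus ?thesis by (metis of_real_mult of_real_numeral of_real_minus of_real_1)
  qed
  have f: "of_nat (fact (Suc j)) = (of_nat (Suc j) * of_nat (fact j) :: complex)"
    by (simp only: fact_Suc of_nat_mult of_nat_id)
  have e3: "(of_nat (3 * Suc j) :: complex) = 3 * of_nat (Suc j)" by (simp only: of_nat_mult of_nat_numeral)
  have nz: "(of_nat (fact j) :: complex) \<noteq> 0" "(of_nat (Suc j) :: complex) \<noteq> 0"
    by simp (rule of_nat_neq_0)
  show ?thesis
    unfolding f e3 power_Suc by (rule scalar_gen[OF t nz])
qed

lemma pde_z:
  assumes Epos: "\<And>m. E m > 0" and V: "V \<noteq> 0" and pq: "p \<noteq> q" "p \<le> NN" "q \<le> NN"
  shows "complex_of_real ((E p)\<^sup>2 - (E q)\<^sup>2) * pd p q (\<lambda>J. Zfps NN V \<kappa> E J $ k) J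
    = complex_of_real (V * (E p - E q)) * (J q p * Zfps NN V \<kappa> E J $ k)
      - (if k = 0 then 0 else Lop NN p q (\<lambda>J. Zfps NN V \<kappa> E J $ (k - 1)) J)"
proof -
  let ?t = "complex_of_real (- 1 / (3 * V\<^sup>2))"
  let ?c = "\<lambda>k. (Delta NN ^^ k) (eW NN V \<kappa> E)"
  let ?s = "\<lambda>k. ?t ^ k / of_nat (fact k)"
  have Sc: "\<And>k. S (?c k)" by (intro S_Delta_pow S_eW)
  have zc: "(\<lambda>J. Zfps NN V \<kappa> E J $ k) = (\<lambda>J. ?s k * ?c k J)" for k
    by (simp add: Zfps_nth)
  have P: "complex_of_real ((E p)\<^sup>2 - (E q)\<^sup>2) * pd p q (?c k) J
    = complex_of_real (V * (E p - E q)) * (J q p * ?c k J)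
      + of_nat (3 * k) * complex_of_real (V\<^sup>2) * Lop NN p q (?c (k - 1)) J"
    by (rule pde_c[OF Epos V pq])
  have "complex_of_real ((E p)\<^sup>2 - (E q)\<^sup>2) * pd p q (\<lambda>J. Zfps NN V \<kappa> E J $ k) J
     = ?s k * (complex_of_real ((E p)\<^sup>2 - (E q)\<^sup>2) * pd p q (?c k) J)"
    unfolding zc pd_cmult[OF Sc] by (rule mult.left_commute)
  also have "\<dots> = complex_of_real (V * (E p - E q)) * (J q p * Zfps NN V \<kappa> E J $ k)
      + ?s k * (of_nat (3 * k) * complex_of_real (V\<^sup>2)) * Lop NN p q (?c (k - 1)) J"
  proof -
    have gen2: "s * (a * (x * c) + (n * v) * l) = a * (x * (s * c)) + s * (n * v) * l" for s a x c n v l :: complex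
      by (simp add: algebra_simps)
    show ?thesis unfolding P Zfps_nth by (rule gen2)
  qed
  also have "?s k * (of_nat (3 * k) * complex_of_real (V\<^sup>2)) * Lop NN p q (?c (k - 1)) J
     = - (if k = 0 then 0 else Lop NN p q (\<lambda>J. Zfps NN V \<kappa> E J $ (k - 1)) J)"
  proof (cases k)
    case 0 then show ?thesis by simp
  next
    case (Suc j)
    have "?s k * (of_nat (3 * k) * complex_of_real (V\<^sup>2)) = - ?s j"
      unfolding Suc by (rule scalar_id[OF V])
    moreover have "Lop NN p q (\<lambda>J. Zfps NN V \<kappa> E J $ (k - 1)) J = ?s j * Lop NN p q (?c j) J"
      unfolding zc Suc by (simp only: Lop_cmult[OF Sc] diff_Suc_1)
    ultimately show ?thesis using Suc by simp
  qed
  finally show ?thesis by simp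
qed


lemma Dl_coord_mult0:
  assumes "distinct ds" "S h"
  shows "Dl ds (\<lambda>J. J a b * h J) (\<lambda>_ _. 0) = (if (a,b) \<in> set ds then Dl (remove1 (a,b) ds) h (\<lambda>_ _. 0) else 0)"
  using Dl_coord_mult[OF assms, of a b] by simp

lemma Dl_Lop0:
  assumes "distinct ds" "S f"
  shows "Dl ds (Lop NN p q f) (\<lambda>_ _. 0) = (\<Sum>l\<le>NN. (if (l,p) \<in> set ds then Dl (remove1 (l,p) ds) (pd l q f) (\<lambda>_ _. 0) else 0)
      - (if (q,l) \<in> set ds then Dl (remove1 (q,l) ds) (pd p l f) (\<lambda>_ _. 0) else 0))"
proof -
  have S1: "\<And>l. S (\<lambda>J. J l p * pd l q f J)" "\<And>l. S (\<lambda>J. J q l * pd p l f J)"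
    using assms(2) by (auto intro!: S_mult S_coord S_pd)
  have "Dl ds (Lop NN p q f) (\<lambda>_ _. 0) = (\<Sum>l\<le>NN. Dl ds (\<lambda>J. J l p * pd l q f J - J q l * pd p l f J) (\<lambda>_ _. 0))"
    unfolding Lop_def using S1 by (simp add: Dl_sum S_minus)
  also have "\<dots> = (\<Sum>l\<le>NN. Dl ds (\<lambda>J. J l p * pd l q f J) (\<lambda>_ _. 0) - Dl ds (\<lambda>J. J q l * pd p l f J) (\<lambda>_ _. 0))"
    using S1 by (simp add: Dl_minus)
  finally show ?thesis
    using assms by (simp add: Dl_coord_mult0 S_pd)
qed

lemma cp_Cons2: "cycle_pairs (a1 # a2 # rest) = (a1, a2) # zip (a2 # rest) (rest @ [a1])"
  by (simp add: cycle_pairs_def)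

lemma cp_def': "cycle_pairs (a # rest) = zip (a # rest) (rest @ [a])"
  by (simp add: cycle_pairs_def)

lemma map_fst_cp: "map fst (cycle_pairs c) = c"
  by (cases c) (simp_all add: cycle_pairs_def)

lemma cp_mem: "(u, v) \<in> set (cycle_pairs c) \<Longrightarrow> u \<in> set c \<and> v \<in> set c"
  by (cases c) (auto simp: cycle_pairs_def dest: set_zip_leftD set_zip_rightD)

lemma concat_cp_mem: "(u, v) \<in> set (concat (map cycle_pairs T)) \<Longrightarrow> u \<in> set (concat T) \<and> v \<in> set (concat T)"
  by (auto dest: cp_mem)

lemma map_fst_concat_cp: "map fst (concat (map cycle_pairs T)) = concat T"
  by (induction T) (simp_all add: map_fst_cp)

lemma combi:
  fixes a1 a2 :: nat and rest :: "nat list" and T :: "nat list list"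
  defines "R \<equiv> concat (map cycle_pairs T)"
  defines "ds' \<equiv> zip (a2 # rest) (rest @ [a1]) @ R"
  assumes dist: "distinct (concat ((a1 # a2 # rest) # T))"
  shows "distinct ds'"
    and "\<And>l. (l, a1) \<in> set ds' \<longleftrightarrow> l = last (a2 # rest)"
    and "\<And>l. (a2, l) \<in> set ds' \<longleftrightarrow> l = hd (rest @ [a1])"
    and "remove1 (last (a2 # rest), a1) ds' = zip (butlast (a2 # rest)) rest @ R"
    and "remove1 (a2, hd (rest @ [a1])) ds' = zip rest (tl (rest @ [a1])) @ R"
    and "zip (a2 # rest) (rest @ [a2]) = zip (butlast (a2 # rest)) rest @ [(last (a2 # rest), a2)]"
    and "zip (a1 # rest) (rest @ [a1]) = (a1, hd (rest @ [a1])) # zip rest (tl (rest @ [a1]))"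
proof -
  let ?xs = "a2 # rest"
  let ?z = "last ?xs"
  let ?y = "hd (rest @ [a1])"
  have xs: "?xs = butlast ?xs @ [?z]" by simp
  have lb: "length (butlast ?xs) = length rest" by simp
  have y: "rest @ [a1] = ?y # tl (rest @ [a1])" by (cases rest) auto
  have z1: "zip ?xs (rest @ [a1]) = zip (butlast ?xs) rest @ [(?z, a1)]"
    by (subst xs) (simp only: zip_append[OF lb] zip_Cons_Cons zip_Nil)
  show "zip ?xs (rest @ [a2]) = zip (butlast ?xs) rest @ [(?z, a2)]"
    by (subst xs) (simp only: zip_append[OF lb] zip_Cons_Cons zip_Nil)
  have z2: "zip ?xs (rest @ [a1]) = (a2, ?y) # zip rest (tl (rest @ [a1]))"
    by (cases rest) auto
  show "zip (a1 # rest) (rest @ [a1]) = (a1, ?y) # zip rest (tl (rest @ [a1]))"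
    by (cases rest) auto
  have d: "a1 \<notin> set rest" "a2 \<notin> set rest" "a1 \<notin> set (concat T)" "a2 \<notin> set (concat T)" "a1 \<noteq> a2"
    using dist by auto
  have mfst: "map fst ds' = ?xs @ concat T"
    unfolding ds'_def R_def by (simp add: map_fst_concat_cp)
  show "distinct ds'"
    using dist mfst by (metis distinct.simps(2) concat.simps(2) append_Cons distinct_map)
  show "\<And>l. (l, a1) \<in> set ds' \<longleftrightarrow> l = ?z"
    unfolding ds'_def z1 R_def using d by (auto dest: set_zip_rightD concat_cp_mem cp_mem)
  show "\<And>l. (a2, l) \<in> set ds' \<longleftrightarrow> l = ?y"
    unfolding ds'_def z2 R_def using d by (auto dest: set_zip_leftD concat_cp_mem cp_mem)
  show "remove1 (?z, a1) ds' = zip (butlast ?xs) rest @ R"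
    unfolding ds'_def z1 using d by (auto simp: remove1_append dest: set_zip_rightD)
  show "remove1 (a2, ?y) ds' = zip rest (tl (rest @ [a1])) @ R"
    unfolding ds'_def z2 by simp
qed

lemma alg1: fixes dZ iZ0 C Z D invZ Z0 Ci w :: "'a::comm_ring_1"
assumes a: "iZ0 * Z0 = 1" "C * Ci = 1" "Z * invZ = 1" "D = - (C * w)"
shows "(dZ * iZ0 * C + Z * iZ0 * D) * (invZ * Z0 * Ci) = dZ * invZ - w"
proof -
  have "(dZ * iZ0 * C + Z * iZ0 * D) * (invZ * Z0 * Ci) = dZ * invZ * ((iZ0 * Z0) * (C * Ci)) + (Z * invZ) * (iZ0 * Z0) * (D * Ci)"
    by (simp add: algebra_simps)
  also have "\<dots> = dZ * invZ + D * Ci" using a(1-3) by simp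
  also have "D * Ci = - ((C * Ci) * w)" using a(4) by (simp add: algebra_simps)
  finally show ?thesis using a(2) by simp
qed

context
  fixes NN :: nat and V \<kappa> :: real and E :: "nat \<Rightarrow> real"
  assumes Epos: "\<And>m. E m > 0" and Vnz: "V \<noteq> 0"
begin

abbreviation "ZZ \<equiv> Zfps NN V \<kappa> E"
abbreviation "Z0 \<equiv> Zfps NN V \<kappa> E (\<lambda>_ _. 0)"
abbreviation "WW \<equiv> Wfree NN V \<kappa> E"

definition cc :: "src \<Rightarrow> complex" where "cc J = exp (WW (\<lambda>_ _. 0) - WW J)"
definition HH :: "src \<Rightarrow> complex fps" where
  "HH J = (ZZ J / Z0) / fps_const ((ZZ J / Z0) $ 0) - 1"
definition PP :: "src \<Rightarrow> complex fps" where "PP J = fps_ln 1 oo HH J"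
definition FF :: "src \<Rightarrow> complex fps" where "FF J = fps_const (WW J - WW (\<lambda>_ _. 0)) + PP J"

lemma Z_0: "ZZ J $ 0 = exp (WW J)"
  by (simp add: Zfps_nth eW_def)

lemma Z_nz: "ZZ J $ 0 \<noteq> 0" by (simp add: Z_0)

lemma S_cc: "S cc"
  unfolding cc_def[abs_def] by (intro S_exp S_minus S_const S_W)

lemma pd_cc: "pd m n cc = (\<lambda>J. - (cc J * pd m n WW J))"
proof -
  have Sm: "S (\<lambda>J. WW (\<lambda>_ _. 0) - WW J)" by (intro S_minus S_const S_W)
  show ?thesis
    unfolding cc_def[abs_def] pd_exp[OF Sm] pd_minus[OF S_const S_W] by simp
qed

lemma Phi_eq: "ZZ J / Z0 = ZZ J * inverse Z0"
  by (rule fps_divide_unit) (rule Z_nz)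

lemma Phi_0: "(ZZ J / Z0) $ 0 = exp (WW J - WW (\<lambda>_ _. 0))"
  unfolding Phi_eq by (simp add: Z_0 exp_diff field_simps)

lemma HH_eq: "HH J = ZZ J * inverse Z0 * fps_const (cc J) - 1"
proof -
  have "(ZZ J / Z0) / fps_const ((ZZ J / Z0) $ 0) = (ZZ J / Z0) * inverse (fps_const ((ZZ J / Z0) $ 0))"
    by (rule fps_divide_unit) (simp add: Phi_0)
  also have "inverse (fps_const ((ZZ J / Z0) $ 0)) = fps_const (cc J)"
    unfolding Phi_0 cc_def by (simp add: fps_const_inverse exp_minus[symmetric])
  finally show ?thesis unfolding HH_def Phi_eq by simp
qed

lemma goodf_HH: "goodf HH"
  unfolding HH_eq[abs_def]
  by (intro goodf_minus goodf_mult goodf_Z goodf_cfps goodf_fps_const S_cc)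

lemma HH_0: "HH J $ 0 = 0"
  unfolding HH_eq by (simp add: Z_0 cc_def exp_minus[symmetric] exp_diff field_simps)

lemma one_HH: "1 + HH J = ZZ J * inverse Z0 * fps_const (cc J)"
  unfolding HH_eq by simp


lemma cc_nz: "cc J \<noteq> 0" by (simp add: cc_def)

lemma Z0_nz: "Z0 $ 0 \<noteq> 0" by (rule Z_nz)

lemma pdf_HH: "pdf m n HH J = pdf m n ZZ J * inverse Z0 * fps_const (cc J)
    + ZZ J * inverse Z0 * fps_const (- (cc J * pd m n WW J))"
proof -
  have G1: "goodf (\<lambda>J. ZZ J * inverse Z0)" by (intro goodf_mult goodf_Z goodf_cfps)
  have G2: "goodf (\<lambda>J. ZZ J * inverse Z0 * fps_const (cc J))" by (intro goodf_mult G1 goodf_fps_const S_cc)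
  have "pdf m n HH = pdf m n (\<lambda>J. ZZ J * inverse Z0 * fps_const (cc J) - 1)"
    unfolding HH_eq[abs_def] ..
  also have "\<dots> = (\<lambda>J. pdf m n (\<lambda>J. ZZ J * inverse Z0 * fps_const (cc J)) J - pdf m n (\<lambda>J. 1) J)"
    by (rule pdf_minus[OF G2 goodf_cfps])
  also have "\<dots> = (\<lambda>J. pdf m n (\<lambda>J. ZZ J * inverse Z0) J * fps_const (cc J) + ZZ J * inverse Z0 * fps_const (pd m n cc J))"
    by (simp add: pdf_cfps pdf_mult[OF G1 goodf_fps_const[OF S_cc]] pdf_fps_const[OF S_cc])
  also have "\<dots> = (\<lambda>J. pdf m n ZZ J * inverse Z0 * fps_const (cc J) + ZZ J * inverse Z0 * fps_const (pd m n cc J))"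
    by (simp add: pdf_cfps pdf_mult[OF goodf_Z goodf_cfps])
  finally show ?thesis by (simp add: pd_cc)
qed

lemma pdf_PP: "pdf m n PP J = pdf m n ZZ J * inverse (ZZ J) - fps_const (pd m n WW J)"
proof -
  have "pdf m n PP J = pdf m n HH J * inverse (1 + HH J)"
    unfolding PP_def[abs_def] using pdf_log[OF goodf_HH HH_0] by simp
  also have "inverse (1 + HH J) = inverse (ZZ J) * Z0 * fps_const (inverse (cc J))"
    unfolding one_HH using Z0_nz
    by (simp add: fps_inverse_mult fps_const_inverse)
  also have "pdf m n HH J * (inverse (ZZ J) * Z0 * fps_const (inverse (cc J))) = pdf m n ZZ J * inverse (ZZ J) - fps_const (pd m n WW J)"
    unfolding pdf_HH
  proof (rule alg1)
    show "inverse Z0 * Z0 = 1" using Z0_nz by (rule inverse_mult_eq_1)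
    show "fps_const (cc J) * fps_const (inverse (cc J)) = 1" using cc_nz by (simp flip: fps_const_mult)
    show "ZZ J * inverse (ZZ J) = 1" using Z_nz by (rule inverse_mult_eq_1')
    show "fps_const (- (cc J * pd m n WW J)) = - (fps_const (cc J) * fps_const (pd m n WW J))"
      by (simp flip: fps_const_mult)
  qed
  finally show ?thesis .
qed

lemma goodf_PP: "goodf PP"
  unfolding PP_def[abs_def] by (rule goodf_log[OF goodf_HH HH_0])

lemma goodf_FF: "goodf FF"
  unfolding FF_def[abs_def] by (intro goodf_add goodf_PP goodf_fps_const S_minus S_W S_const)

lemma pdf_FF: "pdf m n FF J = pdf m n ZZ J * inverse (ZZ J)"
proof -
  have Sm: "S (\<lambda>J. WW J - WW (\<lambda>_ _. 0))" by (intro S_minus S_W S_const)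
  have "pdf m n FF J = fps_const (pd m n (\<lambda>J. WW J - WW (\<lambda>_ _. 0)) J) + pdf m n PP J"
    unfolding FF_def[abs_def] pdf_add[OF goodf_fps_const[OF Sm] goodf_PP] pdf_fps_const[OF Sm] ..
  also have "pd m n (\<lambda>J. WW J - WW (\<lambda>_ _. 0)) J = pd m n WW J"
    by (simp add: pd_minus S_W S_const)
  finally show ?thesis by (simp add: pdf_PP)
qed


definition LZf :: "nat \<Rightarrow> nat \<Rightarrow> (src \<Rightarrow> complex fps) \<Rightarrow> src \<Rightarrow> complex fps" where
  "LZf p q G J = (\<Sum>l\<le>NN. fps_const (J l p) * pdf l q G J - fps_const (J q l) * pdf p l G J)"

lemma LZf_nth: "LZf p q G J $ k = Lop NN p q (\<lambda>J. G J $ k) J"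
  unfolding LZf_def Lop_def by (simp add: fps_sum_nth pdf_nth)

lemma pde_ZZ_fps:
  assumes pq: "p \<noteq> q" "p \<le> NN" "q \<le> NN"
  shows "fps_const (complex_of_real ((E p)\<^sup>2 - (E q)\<^sup>2)) * pdf p q ZZ J
     = fps_const (complex_of_real (V * (E p - E q)) * J q p) * ZZ J - fps_X * LZf p q ZZ J"
proof (rule fps_ext)
  fix k
  show "(fps_const (complex_of_real ((E p)\<^sup>2 - (E q)\<^sup>2)) * pdf p q ZZ J) $ k
     = (fps_const (complex_of_real (V * (E p - E q)) * J q p) * ZZ J - fps_X * LZf p q ZZ J) $ k"
    using pde_z[where E=E and \<kappa>=\<kappa> and k=k and J=J, OF Epos Vnz pq] by (simp add: pdf_nth LZf_nth mult.assoc)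
qed

lemma pde_FF_fps:
  assumes pq: "p \<noteq> q" "p \<le> NN" "q \<le> NN"
  shows "fps_const (complex_of_real ((E p)\<^sup>2 - (E q)\<^sup>2)) * pdf p q FF J
     = fps_const (complex_of_real (V * (E p - E q)) * J q p) - fps_X * LZf p q FF J"
proof -
  let ?i = "inverse (ZZ J)"
  have zi: "ZZ J * ?i = 1" using Z_nz by (rule inverse_mult_eq_1')
  have L: "LZf p q FF J = LZf p q ZZ J * ?i"
    unfolding LZf_def pdf_FF by (simp add: sum_distrib_left algebra_simps)
  have "fps_const (complex_of_real ((E p)\<^sup>2 - (E q)\<^sup>2)) * pdf p q FF J
     = (fps_const (complex_of_real ((E p)\<^sup>2 - (E q)\<^sup>2)) * pdf p q ZZ J) * ?i"
    unfolding pdf_FF by (simp add: mult.assoc)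
  also have "\<dots> = fps_const (complex_of_real (V * (E p - E q)) * J q p) * (ZZ J * ?i) - fps_X * (LZf p q ZZ J * ?i)"
    unfolding pde_ZZ_fps[OF pq] by (simp add: algebra_simps)
  finally show ?thesis unfolding zi L by simp
qed

lemma pde_FF:
  assumes pq: "p \<noteq> q" "p \<le> NN" "q \<le> NN"
  shows "complex_of_real ((E p)\<^sup>2 - (E q)\<^sup>2) * pd p q (\<lambda>J. FF J $ k) J
     = (if k = 0 then complex_of_real (V * (E p - E q)) * J q p else 0)
       - (if k = 0 then 0 else Lop NN p q (\<lambda>J. FF J $ (k - 1)) J)"
proof -
  have "(fps_const (complex_of_real ((E p)\<^sup>2 - (E q)\<^sup>2)) * pdf p q FF J) $ k
     = (fps_const (complex_of_real (V * (E p - E q)) * J q p) - fps_X * LZf p q FF J) $ k"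
    unfolding pde_FF_fps[OF pq] ..
  thus ?thesis by (simp add: pdf_nth LZf_nth)
qed


lemma fpslog_FF:
  assumes "cmod (WW J - WW (\<lambda>_ _. 0)) < 1"
  shows "fpslog (ZZ J / Z0) = FF J"
proof -
  have "\<bar>Im (WW J - WW (\<lambda>_ _. 0))\<bar> < 1"
    using abs_Im_le_cmod[of "WW J - WW (\<lambda>_ _. 0)"] assms by linarith
  hence im: "- pi < Im (WW J - WW (\<lambda>_ _. 0))" "Im (WW J - WW (\<lambda>_ _. 0)) \<le> pi"
    using pi_gt3 by linarith+
  have "Ln ((ZZ J / Z0) $ 0) = WW J - WW (\<lambda>_ _. 0)"
    unfolding Phi_0 using im by (rule Ln_exp)
  thus ?thesis unfolding fpslog_def FF_def PP_def HH_def by simp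
qed

lemma Gcorr_FF:
  "Gcorr NN V \<kappa> E bs $ k = complex_of_real (V powi (int (length bs) - 2)) * Dl (concat (map cycle_pairs bs)) (\<lambda>J. FF J $ k) (\<lambda>_ _. 0)"
proof -
  let ?U = "{J. cmod (WW J - WW (\<lambda>_ _. 0)) < 1}"
  have c: "continuous_on UNIV (\<lambda>J. WW J - WW (\<lambda>_ _. 0))"
    by (intro S_continuous S_minus S_W S_const)
  have "open ?U"
  proof -
    have "open ((\<lambda>J. WW J - WW (\<lambda>_ _. 0)) -` ball 0 1)"
      using c by (simp add: continuous_on_open_vimage)
    moreover have "(\<lambda>J. WW J - WW (\<lambda>_ _. 0)) -` ball 0 1 = ?U" by (auto simp: dist_norm norm_minus_commute)
    ultimately show ?thesis by simp
  qed
  moreover have "(\<lambda>_ _. 0) \<in> ?U" by simp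
  moreover have "\<And>J. J \<in> ?U \<Longrightarrow> fpslog (ZZ J / Z0) $ k = FF J $ k"
    using fpslog_FF by simp
  ultimately have "Dl (concat (map cycle_pairs bs)) (\<lambda>J. fpslog (ZZ J / Z0) $ k) (\<lambda>_ _. 0)
     = Dl (concat (map cycle_pairs bs)) (\<lambda>J. FF J $ k) (\<lambda>_ _. 0)"
    by (intro Dl_local[of ?U]) auto
  thus ?thesis by (simp add: Gcorr_def dall_Dl)
qed


lemma S_FF: "S (\<lambda>J. FF J $ k)"
  using goodf_FF by (simp add: goodf_def)

lemma main_general:
  assumes len: "length bs \<ge> 2" "length (hd bs) \<ge> 2" and ne: "\<forall>b\<in>set bs. length b \<ge> 1"
    and dist: "distinct (concat bs)" and rng: "\<forall>i\<in>set (concat bs). i \<le> NN"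
    and Ediff: "E (hd bs ! 0) \<noteq> E (hd bs ! 1)"
  shows "Gcorr NN V \<kappa> E bs =
    fps_X * fps_const (1 / complex_of_real ((E (hd bs ! 0))\<^sup>2 - (E (hd bs ! 1))\<^sup>2))
    * (Gcorr NN V \<kappa> E ((hd bs ! 0 # drop 2 (hd bs)) # tl bs)
       - Gcorr NN V \<kappa> E ((hd bs ! 1 # drop 2 (hd bs)) # tl bs))"
proof -
  obtain b1 T where bsT: "bs = b1 # T" using len by (cases bs) auto
  obtain a1 a2 rest where b1: "b1 = a1 # a2 # rest" using len bsT by (cases b1 rule: remdups_adj.cases) auto
  have Tne: "T \<noteq> []" using len bsT by auto
  have Tcyc: "\<forall>c\<in>set T. c \<noteq> []" using ne bsT by auto
  define R where "R = concat (map cycle_pairs T)"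
  define ds' where "ds' = zip (a2 # rest) (rest @ [a1]) @ R"
  define z where "z = last (a2 # rest)"
  define y where "y = hd (rest @ [a1])"
  have dist': "distinct (concat ((a1 # a2 # rest) # T))" using dist bsT b1 by simp
  note C = combi[OF dist', folded R_def, folded ds'_def, folded z_def y_def]
  have a12: "a1 \<noteq> a2" using dist' by auto
  have rng': "a1 \<le> NN" "a2 \<le> NN" "z \<le> NN" "y \<le> NN"
    using rng bsT b1 unfolding z_def y_def by (auto simp: hd_append)
  have Rne: "R \<noteq> []"
  proof -
    obtain c T' where "T = c # T'" using Tne by (cases T) auto
    moreover have "c \<noteq> []" using Tcyc \<open>T = c # T'\<close> by auto
    ultimately show ?thesis unfolding R_def by (cases c) (auto simp: cycle_pairs_def)
  qed
  have lds: "length ds' \<ge> 2" using Rne unfolding ds'_def by (cases R) auto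
  let ?Rc = "complex_of_real ((E a1)\<^sup>2 - (E a2)\<^sup>2)"
  have Rc: "?Rc \<noteq> 0"
  proof -
    have "E a1 \<noteq> E a2" using Ediff bsT b1 by simp
    moreover have "E a1 > 0" "E a2 > 0" using Epos by auto
    ultimately have "(E a1)\<^sup>2 \<noteq> (E a2)\<^sup>2" by (metis power2_eq_iff_nonneg less_imp_le)
    thus ?thesis unfolding of_real_eq_0_iff by simp
  qed
  let ?F = "\<lambda>k. (\<lambda>J. FF J $ k)"
  let ?G = "\<lambda>k. Dl ((a1, a2) # ds') (?F k) (\<lambda>_ _. 0)"
  let ?GA = "\<lambda>k. Dl (cycle_pairs (a1 # rest) @ R) (?F k) (\<lambda>_ _. 0)"
  let ?GB = "\<lambda>k. Dl (cycle_pairs (a2 # rest) @ R) (?F k) (\<lambda>_ _. 0)"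
  have claim: "?Rc * ?G k = (if k = 0 then 0 else ?GA (k - 1) - ?GB (k - 1))" for k
  proof -
    have "?Rc * ?G k = Dl ds' (\<lambda>J. ?Rc * pd a1 a2 (?F k) J) (\<lambda>_ _. 0)"
      by (simp add: Dl_pd_comm[OF S_FF] Dl_cmult[OF S_pd[OF S_FF]])
    also have "(\<lambda>J. ?Rc * pd a1 a2 (?F k) J) = (\<lambda>J. (if k = 0 then complex_of_real (V * (E a1 - E a2)) * J a2 a1 else 0)
       - (if k = 0 then 0 else Lop NN a1 a2 (?F (k - 1)) J))"
      by (rule ext) (rule pde_FF[OF a12 rng'(1,2)])
    finally have eq: "?Rc * ?G k = Dl ds' (\<lambda>J. (if k = 0 then complex_of_real (V * (E a1 - E a2)) * J a2 a1 else 0)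
       - (if k = 0 then 0 else Lop NN a1 a2 (?F (k - 1)) J)) (\<lambda>_ _. 0)" .
    show ?thesis
    proof (cases k)
      case 0
      have "Dl ds' (\<lambda>J. complex_of_real (V * (E a1 - E a2)) * (J a2 a1 * 1)) (\<lambda>_ _. 0)
         = complex_of_real (V * (E a1 - E a2)) * Dl ds' (\<lambda>J. J a2 a1 * 1) (\<lambda>_ _. 0)"
        by (simp only: Dl_cmult[OF S_mult[OF S_coord S_const]])
      also have "Dl ds' (\<lambda>J. J a2 a1 * 1) (\<lambda>_ _. 0) = 0"
      proof -
        have "length (remove1 (a2, a1) ds') \<ge> 1" using lds by (auto simp: length_remove1)
        hence "remove1 (a2, a1) ds' \<noteq> []" by auto
        thus ?thesis
          using Dl_coord_mult0[OF C(1) S_const, of a2 a1 1] by (simp add: Dl_const)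
      qed
      finally show ?thesis using eq 0 by simp
    next
      case (Suc j)
      have SL: "S (Lop NN a1 a2 (?F j))" by (rule S_Lop[OF S_FF])
      have "?Rc * ?G k = Dl ds' (\<lambda>J. (-1) * Lop NN a1 a2 (?F j) J) (\<lambda>_ _. 0)"
        using eq Suc by simp
      also have "\<dots> = - Dl ds' (Lop NN a1 a2 (?F j)) (\<lambda>_ _. 0)"
        by (simp only: Dl_cmult[OF SL]) simp
      also have "Dl ds' (Lop NN a1 a2 (?F j)) (\<lambda>_ _. 0)
          = (\<Sum>l\<le>NN. (if l = z then Dl (remove1 (l, a1) ds') (pd l a2 (?F j)) (\<lambda>_ _. 0) else 0)
             - (if l = y then Dl (remove1 (a2, l) ds') (pd a1 l (?F j)) (\<lambda>_ _. 0) else 0))"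
        unfolding Dl_Lop0[OF C(1) S_FF] using C(2,3) by simp
      also have "\<dots> = Dl (remove1 (z, a1) ds') (pd z a2 (?F j)) (\<lambda>_ _. 0) - Dl (remove1 (a2, y) ds') (pd a1 y (?F j)) (\<lambda>_ _. 0)"
        using rng' by (simp add: sum_subtractf sum.delta')
      also have "Dl (remove1 (z, a1) ds') (pd z a2 (?F j)) (\<lambda>_ _. 0) = ?GB j"
      proof -
        have "Dl (remove1 (z, a1) ds') (pd z a2 (?F j)) = Dl (zip (butlast (a2 # rest)) rest) (Dl R (pd z a2 (?F j)))"
          unfolding C(4) Dl_append ..
        also have "\<dots> = Dl (zip (butlast (a2 # rest)) rest @ [(z, a2)]) (Dl R (?F j))"
          by (simp add: Dl_pd_comm[OF S_FF] Dl_append)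
        also have "\<dots> = Dl (cycle_pairs (a2 # rest) @ R) (?F j)"
          unfolding cp_def' C(6) Dl_append ..
        finally show ?thesis by simp
      qed
      also have "Dl (remove1 (a2, y) ds') (pd a1 y (?F j)) (\<lambda>_ _. 0) = ?GA j"
      proof -
        have "Dl (remove1 (a2, y) ds') (pd a1 y (?F j)) = pd a1 y (Dl (zip rest (tl (rest @ [a1])) @ R) (?F j))"
          unfolding C(5) by (rule Dl_pd_comm[OF S_FF])
        also have "\<dots> = Dl (cycle_pairs (a1 # rest) @ R) (?F j)"
          unfolding cp_def' C(7) by simp
        finally show ?thesis by simp
      qed
      finally show ?thesis using Suc by simp
    qed
  qed
  have hd: "hd bs ! 0 = a1" "hd bs ! 1 = a2" "drop 2 (hd bs) = rest" "tl bs = T" using bsT b1 by auto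
  have cbs: "concat (map cycle_pairs bs) = (a1, a2) # ds'"
    unfolding bsT b1 ds'_def R_def by (simp add: cp_Cons2)
  have cA: "concat (map cycle_pairs ((a1 # rest) # T)) = cycle_pairs (a1 # rest) @ R" unfolding R_def by simp
  have cB: "concat (map cycle_pairs ((a2 # rest) # T)) = cycle_pairs (a2 # rest) @ R" unfolding R_def by simp
  have lAB: "length ((a1 # rest) # T) = length bs" "length ((a2 # rest) # T) = length bs" using bsT by auto
  show ?thesis
  proof (rule fps_ext)
    fix k
    let ?Vp = "complex_of_real (V powi (int (length bs) - 2))"
    have L: "Gcorr NN V \<kappa> E bs $ k = ?Vp * ?G k"
      unfolding Gcorr_FF cbs ..
    have A: "\<And>k. Gcorr NN V \<kappa> E ((a1 # rest) # T) $ k = ?Vp * ?GA k"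
      unfolding Gcorr_FF cA lAB ..
    have B: "\<And>k. Gcorr NN V \<kappa> E ((a2 # rest) # T) $ k = ?Vp * ?GB k"
      unfolding Gcorr_FF cB lAB ..
    have G: "?G k = (if k = 0 then 0 else (?GA (k - 1) - ?GB (k - 1)) / ?Rc)"
      using claim[of k] Rc by (auto simp: field_simps)
    have gen: "v * ((a - b) / r) = (1 / r) * (v * a - v * b)" for v a b r :: complex
      by (simp add: right_diff_distrib divide_inverse mult_ac)
    show "Gcorr NN V \<kappa> E bs $ k = (fps_X * fps_const (1 / complex_of_real ((E (hd bs ! 0))\<^sup>2 - (E (hd bs ! 1))\<^sup>2))
      * (Gcorr NN V \<kappa> E ((hd bs ! 0 # drop 2 (hd bs)) # tl bs) - Gcorr NN V \<kappa> E ((hd bs ! 1 # drop 2 (hd bs)) # tl bs))) $ k"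
    proof (cases k)
      case 0 then show ?thesis unfolding L G by simp
    next
      case (Suc j)
      have G': "?G k = (?GA j - ?GB j) / ?Rc" using G Suc by simp
      have "(fps_X * fps_const (1 / ?Rc) * (Gcorr NN V \<kappa> E ((a1 # rest) # T) - Gcorr NN V \<kappa> E ((a2 # rest) # T))) $ k
          = (1 / ?Rc) * (Gcorr NN V \<kappa> E ((a1 # rest) # T) $ j - Gcorr NN V \<kappa> E ((a2 # rest) # T) $ j)"
        unfolding Suc by (simp add: mult.assoc)
      also have "\<dots> = ?Vp * ?G k" unfolding A B G' by (rule gen[symmetric])
      finally show ?thesis unfolding hd L by simp
    qed
  qed
qed

end


theorem proposition3:
  fixes NN :: nat and V \<kappa> \<mu> :: real and e :: "real \<Rightarrow> real"
    and bs :: "nat list list"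
  assumes "NN \<ge> 1" and "V > 0" and "\<mu> > 0"
    and "\<forall>x\<ge>0. e differentiable (at x within {0..})"
    and "strict_mono_on {0..} e" and "e 0 = 0" and "\<forall>x\<ge>0. e x \<ge> 0"
    and "length bs \<ge> 2" and "length (hd bs) \<ge> 2"
    and "\<forall>b\<in>set bs. length b \<ge> 1"
    and "distinct (concat bs)" and "\<forall>i\<in>set (concat bs). i \<le> NN"
  shows "Gcorr NN V \<kappa> (Eval \<mu> V e) bs =
    fps_X * fps_const (1 / complex_of_real ((Eval \<mu> V e (hd bs ! 0))\<^sup>2 - (Eval \<mu> V e (hd bs ! 1))\<^sup>2))
    * (Gcorr NN V \<kappa> (Eval \<mu> V e) ((hd bs ! 0 # drop 2 (hd bs)) # tl bs)
       - Gcorr NN V \<kappa> (Eval \<mu> V e) ((hd bs ! 1 # drop 2 (hd bs)) # tl bs))"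
proof (rule main_general)
  have mu2: "\<mu>\<^sup>2 > 0" using assms(3) by simp
  have arg: "real m / (\<mu>\<^sup>2 * V) \<ge> 0" for m using mu2 assms(2) by simp
  show "\<And>m. Eval \<mu> V e m > 0"
  proof -
    fix m
    have "e (real m / (\<mu>\<^sup>2 * V)) \<ge> 0" using assms(7) arg by simp
    thus "Eval \<mu> V e m > 0" unfolding Eval_def using mu2 by (intro mult_pos_pos) auto
  qed
  show "V \<noteq> 0" using assms(2) by simp
  show "Eval \<mu> V e (hd bs ! 0) \<noteq> Eval \<mu> V e (hd bs ! 1)"
  proof
    assume eq: "Eval \<mu> V e (hd bs ! 0) = Eval \<mu> V e (hd bs ! 1)"
    obtain b1 T where bsT: "bs = b1 # T" using assms(8) by (cases bs) auto
    obtain a1 a2 rest where b1: "b1 = a1 # a2 # rest" using assms(9) bsT by (cases b1 rule: remdups_adj.cases) auto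
    have ne: "a1 \<noteq> a2" using assms(11) bsT b1 by auto
    have "e (real a1 / (\<mu>\<^sup>2 * V)) = e (real a2 / (\<mu>\<^sup>2 * V))"
      using eq mu2 bsT b1 unfolding Eval_def by simp
    moreover have "real a1 / (\<mu>\<^sup>2 * V) \<noteq> real a2 / (\<mu>\<^sup>2 * V)"
      using ne mu2 assms(2) by (simp add: divide_cancel_right)
    ultimately show False
      using assms(5) arg[of a1] arg[of a2] unfolding strict_mono_on_def
      by (metis atLeast_iff linorder_neq_iff order_less_irrefl)
  qed
qed (use assms in auto)

end
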